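(* Let $0<\varepsilon\le1$ and let $e_n$ ($n\ge0$) be the normalized eigenvectors of $h_\varepsilon$. Then for every $n$, $e_n\notin D(S_\varepsilon)$ and $e_n\notin D(S^*_\varepsilon)$.
   Context: Work in $L^2(\mathbb{R})$. Let $q$ be multiplication by $x$, $p=-i\,d/dx$, $t=q^{-1}p$ with $D(t)=\{f\in D(p):pf\in D(q^{-1})\}$, $t^*$ its adjoint; $L^2_0$, $L^2_1$ the even/odd subspaces. For $0<\varepsilon\le1$, $h_\varepsilon=\frac12(\varepsilon p^2+q^2)$ on $D(p^2)\cap D(q^2)$; its spectrum is $\{\sqrt\varepsilon(n+\frac12)\}_{n\ge0}$ with normalized eigenvectors $e_n(x)=c_nH_n(x/\varepsilon^{1/4})e^{-x^2/(2\sqrt\varepsilon)}$, $H_n$ the Hermite polynomials, $c_n$ normalizing constants. Define $S_\varepsilon$ in $L^2_0$ by $D(S_\varepsilon)=\{f\in L^2_0\cap\bigcap_nD(t^{2n+1}):\sum_{n=0}^N\frac{(-1)^n}{2n+1}(\sqrt\varepsilon t)^{2n+1}f$ converges in norm$\}$, $S_\varepsilon f=-\varepsilon^{-1/2}\sum_{n\ge0}\frac{(-1)^n}{2n+1}(\sqrt\varepsilon t)^{2n+1}f$, and $S^*_\varepsilon$ (notation only) in $L^2_1$ by the same formulas with $t^*$ and $L^2_1$. *)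

theory Defs
  imports "HOL-Analysis.Analysis"
begin

text \<open>Elements of L^2(R) are represented by functions real => complex; two
functions represent the same element iff they agree almost everywhere.
Operators are represented by relations between representatives.\<close>

definition L2 :: "(real \<Rightarrow> complex) set" where
  "L2 = {f. f \<in> borel_measurable lborel \<and> integrable lborel (\<lambda>x. (cmod (f x))^2)}"

definition L2_norm :: "(real \<Rightarrow> complex) \<Rightarrow> real" where
  "L2_norm f = sqrt (LINT x|lborel. (cmod (f x))^2)"

definition L2_inner :: "(real \<Rightarrow> complex) \<Rightarrow> (real \<Rightarrow> complex) \<Rightarrow> complex" where
  "L2_inner f g = (LINT x|lborel. f x * cnj (g x))"

definition L2_even :: "(real \<Rightarrow> complex) set" where
  "L2_even = {f \<in> L2. AE x in lborel. f (- x) = f x}"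

definition L2_odd :: "(real \<Rightarrow> complex) set" where
  "L2_odd = {f \<in> L2. AE x in lborel. f (- x) = - f x}"

text \<open>p = -i d/dx on its maximal domain H^1(R): p_rel f h means f in D(p) and h represents p f,
i.e. f agrees a.e. with an absolutely continuous function c + int_0^x g with g = i h in L^2.\<close>
definition p_rel :: "(real \<Rightarrow> complex) \<Rightarrow> (real \<Rightarrow> complex) \<Rightarrow> bool" where
  "p_rel f h \<longleftrightarrow> f \<in> L2 \<and> h \<in> L2 \<and>
     (\<exists>c. AE x in lborel. f x = c + interval_lebesgue_integral lborel (ereal 0) (ereal x) (\<lambda>s. \<i> * h s))"

definition qinv_rel :: "(real \<Rightarrow> complex) \<Rightarrow> (real \<Rightarrow> complex) \<Rightarrow> bool" where
  "qinv_rel f g \<longleftrightarrow> f \<in> L2 \<and> g \<in> L2 \<and> (AE x in lborel. g x = f x / complex_of_real x)"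

definition t_rel :: "(real \<Rightarrow> complex) \<Rightarrow> (real \<Rightarrow> complex) \<Rightarrow> bool" where
  "t_rel f g \<longleftrightarrow> (\<exists>h. p_rel f h \<and> qinv_rel h g)"

definition tadj_rel :: "(real \<Rightarrow> complex) \<Rightarrow> (real \<Rightarrow> complex) \<Rightarrow> bool" where
  "tadj_rel g w \<longleftrightarrow> g \<in> L2 \<and> w \<in> L2 \<and>
     (\<forall>f u. t_rel f u \<longrightarrow> L2_inner u g = L2_inner f w)"

fun rel_pow :: "(('a \<Rightarrow> 'b) \<Rightarrow> ('a \<Rightarrow> 'b) \<Rightarrow> bool) \<Rightarrow> nat \<Rightarrow> ('a \<Rightarrow> 'b) \<Rightarrow> ('a \<Rightarrow> 'b) \<Rightarrow> bool" where
  "rel_pow T 0 f g = (f = g)"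
| "rel_pow T (Suc k) f g = (\<exists>h. T f h \<and> rel_pow T k h g)"

text \<open>Domain of S_eps (T = t, V = L^2_0) resp. S^*_eps (T = t^*, V = L^2_1):
f in V, f in D(T^(2n+1)) for all n, and the partial sums
sum_{n=0}^N (-1)^n/(2n+1) (sqrt eps T)^(2n+1) f converge in L^2 norm.\<close>
definition D_series :: "real \<Rightarrow> ((real \<Rightarrow> complex) \<Rightarrow> (real \<Rightarrow> complex) \<Rightarrow> bool)
     \<Rightarrow> (real \<Rightarrow> complex) set \<Rightarrow> (real \<Rightarrow> complex) set" where
  "D_series \<epsilon> T V = {f. f \<in> V \<and> (\<forall>n. \<exists>g. rel_pow T (2*n+1) f g) \<and>
     (\<exists>u. (\<forall>n. rel_pow T (2*n+1) f (u n)) \<and>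
       (\<exists>F\<in>L2. (\<lambda>N. L2_norm (\<lambda>x. (\<Sum>n\<le>N. complex_of_real ((-1)^n / real (2*n+1) * sqrt \<epsilon> ^ (2*n+1)) * u n x) - F x))
                 \<longlonglongrightarrow> 0))}"

definition D_S :: "real \<Rightarrow> (real \<Rightarrow> complex) set" where
  "D_S \<epsilon> = D_series \<epsilon> t_rel L2_even"

definition D_Sstar :: "real \<Rightarrow> (real \<Rightarrow> complex) set" where
  "D_Sstar \<epsilon> = D_series \<epsilon> tadj_rel L2_odd"

fun hermite :: "nat \<Rightarrow> real \<Rightarrow> real" where
  "hermite 0 x = 1"
| "hermite (Suc 0) x = 2 * x"
| "hermite (Suc (Suc n)) x = 2 * x * hermite (Suc n) x - 2 * real (Suc n) * hermite n x"

definition herm_unnorm :: "real \<Rightarrow> nat \<Rightarrow> real \<Rightarrow> real" where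
  "herm_unnorm \<epsilon> n x = hermite n (x / \<epsilon> powr (1/4)) * exp (- (x^2) / (2 * sqrt \<epsilon>))"

definition herm_const :: "real \<Rightarrow> nat \<Rightarrow> real" where
  "herm_const \<epsilon> n = 1 / sqrt (LINT x|lborel. (herm_unnorm \<epsilon> n x)^2)"

definition eigvec :: "real \<Rightarrow> nat \<Rightarrow> real \<Rightarrow> complex" where
  "eigvec \<epsilon> n x = complex_of_real (herm_const \<epsilon> n * herm_unnorm \<epsilon> n x)"

end

theory Submission
  imports Defs "HOL-Probability.Distributions" "HOL-Computational_Algebra.Polynomial" "HOL-Real_Asymp.Real_Asymp"
begin
lemma gauss_mono_int:
  fixes c :: real assumes c: "c > 0"
  shows "integrable lborel (\<lambda>x. x^k * exp (- c * x\<^sup>2))"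
proof -
  define s where "s = sqrt (1/(2*c))"
  have s: "s > 0" using c by (simp add: s_def)
  have s2: "2 * s\<^sup>2 = 1/c" using c by (simp add: s_def)
  have I: "integrable lborel (\<lambda>x. sqrt (2 * pi * s\<^sup>2) * (normal_density 0 s x * (x - 0)^k))"
    using s by (intro integrable_mult_right integrable_normal_moment) auto
  have E: "sqrt (2 * pi * s\<^sup>2) * (normal_density 0 s x * (x - 0)^k) = x^k * exp (- c * x\<^sup>2)" for x
  proof -
    have "- x\<^sup>2 / (2 * s\<^sup>2) = - c * x\<^sup>2" by (simp add: s2)
    moreover have "sqrt (2 * pi * s\<^sup>2) > 0" using s by simp
    ultimately show ?thesis unfolding normal_density_def using s by (simp add: field_simps)
  qed
  show ?thesis using I unfolding E .
qed

lemma gauss_poly_int: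
  fixes c :: real assumes c: "c > 0"
  shows "integrable lborel (\<lambda>x. poly Q x * exp (- c * x\<^sup>2))"
proof -
  have "integrable lborel (\<lambda>x. \<Sum>j\<le>degree Q. coeff Q j * (x^j * exp (- c * x\<^sup>2)))"
    apply (rule Bochner_Integration.integrable_sum)
    apply (rule integrable_mult_right)
    apply (rule gauss_mono_int[OF c])
    done
  moreover have "(\<Sum>j\<le>degree Q. coeff Q j * (x^j * exp (- c * x\<^sup>2))) = poly Q x * exp (- c * x\<^sup>2)" for x
    by (simp add: poly_altdef sum_distrib_right sum_distrib_left mult_ac)
  ultimately show ?thesis by simp
qed

lemma gauss_mono_lim_top:
  fixes c :: real assumes c: "c > 0"
  shows "((\<lambda>x. x^k * exp (- c * x\<^sup>2)) \<longlongrightarrow> 0) at_top"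
proof -
  have lim1: "((\<lambda>u. u ^ k / exp u) \<longlongrightarrow> (0::real)) at_top" by (rule tendsto_power_div_exp_0)
  have f: "filterlim (\<lambda>x::real. c * x\<^sup>2) at_top at_top"
    using c by real_asymp
  have lim2: "((\<lambda>x. (c * x\<^sup>2) ^ k / exp (c * x\<^sup>2)) \<longlongrightarrow> (0::real)) at_top"
    using filterlim_compose[OF lim1 f] by (simp add: o_def)
  have lim3: "((\<lambda>x. (c * x\<^sup>2) ^ k / exp (c * x\<^sup>2) * (1 / (c^k * x^k))) \<longlongrightarrow> (0::real)) at_top"
  proof -
    have "((\<lambda>x::real. 1 / (c^k * x^k)) \<longlongrightarrow> (if k = 0 then 1 else 0)) at_top"
    proof (cases "k = 0")
      case True then show ?thesis by simp
    next
      case False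
      have "filterlim (\<lambda>x::real. c^k * x^k) at_top at_top"
        using c False by (intro filterlim_tendsto_pos_mult_at_top[OF tendsto_const] filterlim_pow_at_top filterlim_ident) auto
      then have "((\<lambda>x::real. inverse (c^k * x^k)) \<longlongrightarrow> 0) at_top"
        by (rule tendsto_inverse_0_at_top)
      then show ?thesis using False by (simp add: inverse_eq_divide)
    qed
    from tendsto_mult[OF lim2 this] show ?thesis by simp
  qed
  show ?thesis
  proof (rule Lim_transform_eventually[OF lim3])
    show "\<forall>\<^sub>F x in at_top. (c * x\<^sup>2) ^ k / exp (c * x\<^sup>2) * (1 / (c ^ k * x ^ k)) = x ^ k * exp (- c * x\<^sup>2)"
      using eventually_gt_at_top[of 0]
    proof eventually_elim
      case (elim x)
      then show ?case using c by (simp add: power_mult_distrib field_simps exp_minus power2_eq_square power_mult)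
    qed
  qed
qed

lemma gauss_mono_lim_bot:
  fixes c :: real assumes c: "c > 0"
  shows "((\<lambda>x. x^k * exp (- c * x\<^sup>2)) \<longlongrightarrow> 0) at_bot"
proof -
  have "((\<lambda>x. (-1)^k * ((-x)^k * exp (- c * (-x)\<^sup>2))) \<longlongrightarrow> (-1)^k * 0) at_bot"
    by (intro tendsto_mult tendsto_const filterlim_compose[OF gauss_mono_lim_top[OF c] filterlim_uminus_at_top_at_bot])
  moreover have "(-1)^k * ((-x)^k * exp (- c * (-x)\<^sup>2)) = x^k * exp (- c * x\<^sup>2)" for x :: real
  proof -
    have "(-1)^k * (-x)^k = ((-1) * (-x))^k" by (simp only: power_mult_distrib)
    then show ?thesis by (simp add: mult.assoc[symmetric])
  qed
  ultimately show ?thesis by (simp only: mult_zero_right)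
qed

lemma gauss_poly_lim:
  fixes c :: real assumes c: "c > 0"
  shows "((\<lambda>x. poly Q x * exp (- c * x\<^sup>2)) \<longlongrightarrow> 0) at_top"
        "((\<lambda>x. poly Q x * exp (- c * x\<^sup>2)) \<longlongrightarrow> 0) at_bot"
proof -
  have eq: "poly Q x * exp (- c * x\<^sup>2) = (\<Sum>j\<le>degree Q. coeff Q j * (x^j * exp (- c * x\<^sup>2)))" for x
    by (simp add: poly_altdef sum_distrib_right sum_distrib_left mult_ac)
  have "((\<lambda>x. \<Sum>j\<le>degree Q. coeff Q j * (x^j * exp (- c * x\<^sup>2))) \<longlongrightarrow> (\<Sum>j\<le>degree Q. coeff Q j * 0)) at_top"
    by (intro tendsto_sum tendsto_mult tendsto_const gauss_mono_lim_top c)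
  then show "((\<lambda>x. poly Q x * exp (- c * x\<^sup>2)) \<longlongrightarrow> 0) at_top" by (simp only: eq[symmetric] mult_zero_right sum.neutral_const)
  have "((\<lambda>x. \<Sum>j\<le>degree Q. coeff Q j * (x^j * exp (- c * x\<^sup>2))) \<longlongrightarrow> (\<Sum>j\<le>degree Q. coeff Q j * 0)) at_bot"
    by (intro tendsto_sum tendsto_mult tendsto_const gauss_mono_lim_bot c)
  then show "((\<lambda>x. poly Q x * exp (- c * x\<^sup>2)) \<longlongrightarrow> 0) at_bot" by (simp only: eq[symmetric] mult_zero_right sum.neutral_const)
qed

lemma FTC_R:
  fixes F f :: "real \<Rightarrow> real"
  assumes D: "\<And>x. (F has_real_derivative f x) (at x)" and C: "continuous_on UNIV f"
    and I: "integrable lborel f" and T: "(F \<longlongrightarrow> 0) at_top" and B: "(F \<longlongrightarrow> 0) at_bot"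
  shows "integral\<^sup>L lborel f = 0"
proof -
  have "(LBINT x=-\<infinity>..\<infinity>. f x) = 0 - 0"
  proof (rule interval_integral_FTC_integrable)
    show "- \<infinity> < (\<infinity>::ereal)" by simp
    show "(F has_vector_derivative f x) (at x)" for x using D[of x] by (simp add: has_real_derivative_iff_has_vector_derivative)
    show "isCont f x" for x using C by (simp add: continuous_on_eq_continuous_at)
    show "set_integrable lborel (einterval (- \<infinity>) \<infinity>) f" using I by (simp add: set_integrable_def)
    show "((F \<circ> real_of_ereal) \<longlongrightarrow> 0) (at_right (- \<infinity>))" using B by (simp add: ereal_tendsto_simps)
    show "((F \<circ> real_of_ereal) \<longlongrightarrow> 0) (at_left \<infinity>)" using T by (simp add: ereal_tendsto_simps)
  qed
  then show ?thesis by (simp add: interval_lebesgue_integral_def set_lebesgue_integral_def)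
qed

fun hp :: "nat \<Rightarrow> real poly" where
  "hp 0 = 1"
| "hp (Suc 0) = [:0, 2:]"
| "hp (Suc (Suc n)) = [:0, 2:] * hp (Suc n) - smult (2 * real (Suc n)) (hp n)"

lemma poly_hp: "poly (hp n) y = hermite n y"
  by (induction n rule: hp.induct) (auto simp: algebra_simps)

lemma hermite_minus: "hermite n (-y) = (-1)^n * hermite n y"
  by (induction n rule: hp.induct) (auto simp: algebra_simps)

lemma coeff_hp: "coeff (hp n) n = 2^n \<and> (\<forall>j>n. coeff (hp n) j = 0)"
proof (induction n rule: hp.induct)
  case 1 then show ?case by auto
next
  case 2 then show ?case by (auto simp: coeff_pCons split: nat.splits)
next
  case (3 n)
  have m: "[:0, 2:] * p = pCons 0 (smult 2 p)" for p :: "real poly" by simp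
  show ?case using 3 by (auto simp: m coeff_pCons split: nat.splits)
qed

lemma degree_hp: "degree (hp n) = n" and hp_nz: "hp n \<noteq> 0"
proof -
  have "degree (hp n) \<le> n" using coeff_hp[of n] by (intro degree_le) auto
  moreover have "coeff (hp n) n \<noteq> 0" using coeff_hp[of n] by simp
  ultimately show "degree (hp n) = n" by (simp add: le_antisym le_degree)
  show "hp n \<noteq> 0" using \<open>coeff (hp n) n \<noteq> 0\<close> by auto
qed

lemma pderiv_hp: "pderiv (hp n) = smult (2 * real n) (hp (n - 1))"
proof (induction n rule: hp.induct)
  case 1 then show ?case by (simp add: pderiv_pCons)
next
  case 2 then show ?case by (simp add: pderiv_pCons)
next
  case (3 n)
  have m: "[:0, 2:] * p = pCons 0 (smult 2 p)" for p :: "real poly" by simp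
  have pm: "pderiv ([:0, 2:] * p) = smult 2 p + [:0, 2:] * pderiv p" for p :: "real poly"
    by (simp add: pderiv_mult pderiv_pCons pderiv_smult)
  show ?case
  proof (cases n)
    case 0 then show ?thesis by (simp add: pderiv_pCons pderiv_mult)
  next
    case (Suc k)
    have "pderiv (hp (Suc (Suc n))) = smult 2 (hp (Suc n)) + [:0, 2:] * smult (2 * real (Suc n)) (hp n)
          - smult (2 * real (Suc n)) (smult (2 * real n) (hp k))"
      using 3 Suc by (subst hp.simps(3)) (simp del: hp.simps add: pderiv_diff pderiv_pCons pderiv_smult algebra_simps)
    also have "\<dots> = smult 2 (hp (Suc n)) + smult (2 * real (Suc n)) ([:0, 2:] * hp (Suc k) - smult (2 * real (Suc k)) (hp k))"
      using Suc by (simp del: hp.simps add: algebra_simps smult_diff_right)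
    also have "\<dots> = smult 2 (hp (Suc n)) + smult (2 * real (Suc n)) (hp (Suc n))"
      using Suc by simp
    also have "\<dots> = smult (2 * real (Suc (Suc n))) (hp (Suc n))"
      by (simp del: hp.simps add: algebra_simps smult_add_left[symmetric])
    finally show ?thesis by simp
  qed
qed

lemma hermite_deriv: "(hermite n has_real_derivative (2 * real n * hermite (n - 1) y)) (at y)"
proof -
  have "(poly (hp n) has_real_derivative poly (pderiv (hp n)) y) (at y)" by (rule poly_DERIV)
  then show ?thesis unfolding pderiv_hp by (simp add: poly_hp[abs_def])
qed

lemma hermite_Suc: "hermite (Suc m) y = 2 * y * hermite m y - 2 * real m * hermite (m - 1) y"
  by (cases m) auto

lemma xh_poly: "\<exists>Q. \<forall>x. x^i * hermite m (x/s) = poly Q x"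
  by (rule exI[of _ "monom 1 i * pcompose (hp m) [:0, 1/s:]"])
     (simp add: poly_monom poly_pcompose poly_hp field_simps)

lemma xh_int: assumes "c > 0"
  shows "integrable lborel (\<lambda>x. x^i * hermite m (x/s) * exp (- c * x\<^sup>2))"
proof -
  obtain Q where Q: "\<And>x. x^i * hermite m (x/s) = poly Q x" using xh_poly by blast
  show ?thesis unfolding Q by (rule gauss_poly_int[OF assms])
qed

lemma xh_lim: assumes "c > 0"
  shows "((\<lambda>x. x^i * hermite m (x/s) * exp (- c * x\<^sup>2)) \<longlongrightarrow> 0) at_top"
        "((\<lambda>x. x^i * hermite m (x/s) * exp (- c * x\<^sup>2)) \<longlongrightarrow> 0) at_bot"
proof -
  obtain Q where Q: "\<And>x. x^i * hermite m (x/s) = poly Q x" using xh_poly by blast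
  show "((\<lambda>x. x^i * hermite m (x/s) * exp (- c * x\<^sup>2)) \<longlongrightarrow> 0) at_top"
    unfolding Q by (rule gauss_poly_lim[OF assms])
  show "((\<lambda>x. x^i * hermite m (x/s) * exp (- c * x\<^sup>2)) \<longlongrightarrow> 0) at_bot"
    unfolding Q by (rule gauss_poly_lim[OF assms])
qed

definition Mint :: "real \<Rightarrow> nat \<Rightarrow> nat \<Rightarrow> real" where
  "Mint s j m = integral\<^sup>L lborel (\<lambda>x. x^j * hermite m (x/s) * exp (- (1/s\<^sup>2) * x\<^sup>2))"

lemma Phi_deriv:
  assumes s: "s > 0"
  shows "((\<lambda>x. x^j * hermite m (x/s) * exp (- (1/s\<^sup>2) * x\<^sup>2)) has_real_derivative
     (real j * (x^(j-1) * hermite m (x/s) * exp (- (1/s\<^sup>2) * x\<^sup>2))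
      - (1/s) * (x^j * hermite (Suc m) (x/s) * exp (- (1/s\<^sup>2) * x\<^sup>2)))) (at x)"
proof -
  have dx: "((\<lambda>x. x^j) has_real_derivative real j * x^(j-1)) (at x)"
    using DERIV_pow[of j x] by simp
  have dh: "((\<lambda>x. hermite m (x/s)) has_real_derivative (2 * real m * hermite (m - 1) (x/s)) * (1/s)) (at x)"
    using s by (intro DERIV_chain2[OF hermite_deriv]) (auto intro!: derivative_eq_intros)
  have de: "((\<lambda>x. exp (- (1/s\<^sup>2) * x\<^sup>2)) has_real_derivative exp (- (1/s\<^sup>2) * x\<^sup>2) * (- (1/s\<^sup>2) * (2 * x))) (at x)"
    using s by (auto intro!: derivative_eq_intros simp: field_simps eval_nat_numeral)
  show ?thesis
    by (rule DERIV_cong[OF DERIV_mult[OF DERIV_mult[OF dx dh] de]])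
       (unfold hermite_Suc, use s in \<open>simp add: field_simps power2_eq_square\<close>)
qed

lemma Mint_rec:
  assumes s: "s > 0"
  shows "real j * Mint s (j-1) m - (1/s) * Mint s j (Suc m) = 0"
proof -
  have c: "1/s\<^sup>2 > 0" using s by simp
  let ?f = "\<lambda>x. real j * (x^(j-1) * hermite m (x/s) * exp (- (1/s\<^sup>2) * x\<^sup>2))
      - (1/s) * (x^j * hermite (Suc m) (x/s) * exp (- (1/s\<^sup>2) * x\<^sup>2))"
  have I1: "integrable lborel (\<lambda>x. x^(j-1) * hermite m (x/s) * exp (- (1/s\<^sup>2) * x\<^sup>2))"
    by (rule xh_int[OF c])
  have I2: "integrable lborel (\<lambda>x. x^j * hermite (Suc m) (x/s) * exp (- (1/s\<^sup>2) * x\<^sup>2))"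
    by (rule xh_int[OF c])
  have "integral\<^sup>L lborel ?f = 0"
  proof (rule FTC_R[OF Phi_deriv[OF s]])
    have "continuous_on UNIV (\<lambda>x. hermite k (x/s))" for k
    proof -
      have "continuous_on UNIV (\<lambda>x. poly (hp k) (x/s))" using s by (intro continuous_intros) auto
      then show ?thesis by (simp add: poly_hp)
    qed
    then show "continuous_on UNIV ?f"
      by (intro continuous_intros) auto
    show "integrable lborel ?f" using I1 I2 by (intro Bochner_Integration.integrable_diff integrable_mult_right) auto
  qed (rule xh_lim[OF c])+
  moreover have "integral\<^sup>L lborel ?f = real j * Mint s (j-1) m - (1/s) * Mint s j (Suc m)"
    unfolding Mint_def using I1 I2 by (subst Bochner_Integration.integral_diff) auto
  ultimately show ?thesis by simp
qed

lemma Mint_orth: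
  assumes s: "s > 0"
  shows "j < m \<Longrightarrow> Mint s j m = 0"
proof (induction j arbitrary: m)
  case 0
  then obtain k where m: "m = Suc k" by (cases m) auto
  show ?case using Mint_rec[OF s, of 0 k] s m by simp
next
  case (Suc j)
  then obtain k where m: "m = Suc k" and jk: "j < k" by (cases m) auto
  show ?case using Mint_rec[OF s, of "Suc j" k] Suc.IH[OF jk] s m by simp
qed

lemma herm_orth:
  assumes s: "s > 0" and Q: "Q = 0 \<or> degree Q < n"
  shows "integral\<^sup>L lborel (\<lambda>x. poly Q x * hermite n (x/s) * exp (- (1/s\<^sup>2) * x\<^sup>2)) = 0"
proof (cases "Q = 0")
  case True then show ?thesis by simp
next
  case False
  then have d: "degree Q < n" using Q by auto
  have c: "1/s\<^sup>2 > 0" using s by simp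
  have "integral\<^sup>L lborel (\<lambda>x. poly Q x * hermite n (x/s) * exp (- (1/s\<^sup>2) * x\<^sup>2))
      = integral\<^sup>L lborel (\<lambda>x. \<Sum>j\<le>degree Q. coeff Q j * (x^j * hermite n (x/s) * exp (- (1/s\<^sup>2) * x\<^sup>2)))"
    by (rule Bochner_Integration.integral_cong) (auto simp: poly_altdef sum_distrib_left sum_distrib_right mult_ac)
  also have "\<dots> = (\<Sum>j\<le>degree Q. coeff Q j * Mint s j n)"
  proof -
    have "integrable lborel (\<lambda>x. coeff Q j * (x^j * hermite n (x/s) * exp (- (1/s\<^sup>2) * x\<^sup>2)))" for j
      by (rule integrable_mult_right, rule xh_int[OF c])
    then show ?thesis unfolding Mint_def by (subst Bochner_Integration.integral_sum) auto
  qed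
  also have "\<dots> = 0" using Mint_orth[OF s] d by (intro sum.neutral) auto
  finally show ?thesis .
qed

lemma meas_cnj[measurable]: "g \<in> borel_measurable M \<Longrightarrow> (\<lambda>x. cnj (g x)) \<in> borel_measurable M"
  by (rule borel_measurable_continuous_on[of cnj]) (auto intro: continuous_intros)

lemma L2_meas: "f \<in> L2 \<Longrightarrow> f \<in> borel_measurable lborel"
  by (simp add: L2_def)

lemma L2_sq_int: "f \<in> L2 \<Longrightarrow> integrable lborel (\<lambda>x. (cmod (f x))^2)"
  by (simp add: L2_def)

lemma L2_local:
  assumes f: "f \<in> L2"
  shows "set_integrable lborel {a..b} f"
  unfolding set_integrable_def
proof (rule Bochner_Integration.integrable_bound)
  show "integrable lborel (\<lambda>x. indicator {a..b} x + (cmod (f x))^2 :: real)"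
    using L2_sq_int[OF f] by (intro Bochner_Integration.integrable_add) (auto intro!: integrable_real_indicator simp: emeasure_lborel_Icc_eq)
  show "(\<lambda>x. indicat_real {a..b} x *\<^sub>R f x) \<in> borel_measurable lborel"
    using L2_meas[OF f] by measurable
  show "AE x in lborel. norm (indicat_real {a..b} x *\<^sub>R f x) \<le> norm (indicator {a..b} x + (cmod (f x))^2 :: real)"
  proof (intro AE_I2)
    fix x
    have "0 \<le> (cmod (f x) - 1/2)^2" by simp
    moreover have "(cmod (f x) - 1/2)^2 = (cmod (f x))^2 - cmod (f x) + 1/4"
      by (simp add: power2_eq_square algebra_simps)
    ultimately have "cmod (f x) \<le> 1 + (cmod (f x))^2" by linarith
    then show "norm (indicat_real {a..b} x *\<^sub>R f x) \<le> norm (indicator {a..b} x + (cmod (f x))^2 :: real)"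
      by (auto simp: indicator_def)
  qed
qed

lemma L2_prod_int:
  assumes f: "f \<in> L2" and g: "g \<in> L2"
  shows "integrable lborel (\<lambda>x. f x * cnj (g x))"
proof (rule Bochner_Integration.integrable_bound)
  show "integrable lborel (\<lambda>x. (cmod (f x))^2 + (cmod (g x))^2)"
    using L2_sq_int[OF f] L2_sq_int[OF g] by (intro Bochner_Integration.integrable_add)
  show "(\<lambda>x. f x * cnj (g x)) \<in> borel_measurable lborel"
    using L2_meas[OF f] L2_meas[OF g] by measurable
  show "AE x in lborel. norm (f x * cnj (g x)) \<le> norm ((cmod (f x))^2 + (cmod (g x))^2)"
  proof (intro AE_I2)
    fix x
    have "0 \<le> (cmod (f x) - cmod (g x))^2" by simp
    moreover have "(cmod (f x) - cmod (g x))^2 = (cmod (f x))^2 + (cmod (g x))^2 - 2 * (cmod (f x) * cmod (g x))"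
      by (simp add: power2_eq_square algebra_simps)
    moreover have "0 \<le> cmod (f x) * cmod (g x)" by simp
    ultimately have "cmod (f x) * cmod (g x) \<le> (cmod (f x))^2 + (cmod (g x))^2" by linarith
    then show "norm (f x * cnj (g x)) \<le> norm ((cmod (f x))^2 + (cmod (g x))^2)"
      by (simp add: norm_mult)
  qed
qed

lemma AE_point_in:
  assumes E: "AE x in lborel. x \<in> E" and ab: "a < (b::real)"
  shows "\<exists>x\<in>E. a < x \<and> x < b"
proof (rule ccontr)
  assume "\<not> ?thesis"
  then have sub: "{a<..<b} \<subseteq> {x. x \<notin> E}" by auto
  from E obtain N where N: "{x. x \<notin> E} \<subseteq> N" "N \<in> null_sets lborel"
    by (auto simp: eventually_ae_filter)
  have "emeasure lborel {a<..<b} \<le> emeasure lborel N"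
    using sub N by (intro emeasure_mono) auto
  then show False using N ab by (simp add: null_setsD1)
qed

lemma DCT_ind:
  fixes r :: "real \<Rightarrow> complex"
  assumes loc: "set_integrable lborel {-K..K} r"
    and meas: "\<And>m. \<phi> m \<in> borel_measurable borel" "\<phi>' \<in> borel_measurable borel"
    and bnd: "\<And>m x. \<bar>\<phi> m x\<bar> \<le> indicator {-K..K} x"
    and conv: "\<And>x. (\<lambda>m. \<phi> m x) \<longlonglongrightarrow> \<phi>' x"
  shows "(\<lambda>m. integral\<^sup>L lborel (\<lambda>x. \<phi> m x *\<^sub>R r x)) \<longlonglongrightarrow> integral\<^sup>L lborel (\<lambda>x. \<phi>' x *\<^sub>R r x)"
proof (rule integral_dominated_convergence[where w = "\<lambda>x. indicator {-K..K} x * cmod (r x)"])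
  have ir: "integrable lborel (\<lambda>x. indicator {-K..K} x *\<^sub>R r x)" using loc by (simp add: set_integrable_def)
  then have mr: "(\<lambda>x. indicator {-K..K} x *\<^sub>R r x) \<in> borel_measurable lborel" by auto
  have "integrable lborel (\<lambda>x. norm (indicator {-K..K} x *\<^sub>R r x))" using ir by (rule integrable_norm)
  then show "integrable lborel (\<lambda>x. indicator {-K..K} x * cmod (r x))"
    by (simp add: indicator_def if_distrib cong: if_cong)
  have rm: "(\<lambda>x. \<phi>' x *\<^sub>R r x) \<in> borel_measurable lborel \<and> (\<forall>m. (\<lambda>x. \<phi> m x *\<^sub>R r x) \<in> borel_measurable lborel)"
  proof -
    have b': "\<bar>\<phi>' x\<bar> \<le> indicator {-K..K} x" for x
      using conv[of x] bnd[of _ x] by (intro tendsto_le[OF _ tendsto_const tendsto_rabs[OF conv[of x]]]) auto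
    have e1: "\<phi>' x *\<^sub>R r x = \<phi>' x *\<^sub>R (indicator {-K..K} x *\<^sub>R r x)" for x
    proof (cases "x \<in> {-K..K}")
      case False
      then have "\<phi>' x = 0" using b'[of x] by simp
      then show ?thesis by simp
    qed simp
    have e2: "\<phi> m x *\<^sub>R r x = \<phi> m x *\<^sub>R (indicator {-K..K} x *\<^sub>R r x)" for m x
    proof (cases "x \<in> {-K..K}")
      case False
      then have "\<phi> m x = 0" using bnd[of m x] by simp
      then show ?thesis by simp
    qed simp
    have mr': "(\<lambda>x. indicator {-K..K} x *\<^sub>R r x) \<in> borel_measurable borel" using mr by simp
    have "(\<lambda>x. \<phi>' x *\<^sub>R (indicator {-K..K} x *\<^sub>R r x)) \<in> borel_measurable borel"
      by (rule borel_measurable_scaleR[OF meas(2) mr'])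
    moreover have "(\<lambda>x. \<phi> m x *\<^sub>R (indicator {-K..K} x *\<^sub>R r x)) \<in> borel_measurable borel" for m
      by (rule borel_measurable_scaleR[OF meas(1) mr'])
    ultimately show ?thesis unfolding e1 e2 by simp
  qed
  then show "(\<lambda>x. \<phi>' x *\<^sub>R r x) \<in> borel_measurable lborel" "\<And>m. (\<lambda>x. \<phi> m x *\<^sub>R r x) \<in> borel_measurable lborel"
    by auto
  show "AE x in lborel. (\<lambda>m. \<phi> m x *\<^sub>R r x) \<longlonglongrightarrow> \<phi>' x *\<^sub>R r x"
    by (intro AE_I2 tendsto_scaleR conv tendsto_const)
  show "AE x in lborel. norm (\<phi> m x *\<^sub>R r x) \<le> indicator {-K..K} x * cmod (r x)" for m
    using bnd[of m] by (intro AE_I2) (simp add: mult_right_mono)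
qed

lemma Z:
  fixes r :: "real \<Rightarrow> complex"
  assumes loc: "\<And>a b. set_integrable lborel {a..b} r"
    and E: "AE x in lborel. x \<in> E"
    and zero: "\<And>a b. a \<in> E \<Longrightarrow> b \<in> E \<Longrightarrow> a < b \<Longrightarrow> (LINT x:{a..b}|lborel. r x) = 0"
  shows "AE x in lborel. r x = 0"
proof -
  have Z1: "(LINT x:{a..b}|lborel. r x) = 0" for a b
  proof (cases "a \<le> b")
    case False then show ?thesis by (simp add: set_lebesgue_integral_def)
  next
    case True
    have "\<forall>m::nat. \<exists>y\<in>E. a - 1/(real m+1) < y \<and> y < a"
      using AE_point_in[OF E] by (simp add: add_pos_pos)
    then obtain A where A: "\<And>m::nat. A m \<in> E \<and> a - 1/(real m+1) < A m \<and> A m < a" by metis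
    have "\<forall>m::nat. \<exists>y\<in>E. b < y \<and> y < b + 1/(real m+1)"
      using AE_point_in[OF E] by (simp add: add_pos_pos)
    then obtain B where B: "\<And>m::nat. B m \<in> E \<and> b < B m \<and> B m < b + 1/(real m+1)" by metis
    define K where "K = \<bar>a\<bar> + \<bar>b\<bar> + 1"
    have lim: "(\<lambda>m. integral\<^sup>L lborel (\<lambda>x. indicator {A m..B m} x *\<^sub>R r x)) \<longlonglongrightarrow>
               integral\<^sup>L lborel (\<lambda>x. indicator {a..b} x *\<^sub>R r x)"
    proof (rule DCT_ind[where K = K])
      show "set_integrable lborel {-K..K} r" by (rule loc)
      show "\<And>m. indicat_real {A m..B m} \<in> borel_measurable borel" by simp
      show "indicat_real {a..b} \<in> borel_measurable borel" by simp
      show "\<bar>indicat_real {A m..B m} x\<bar> \<le> indicat_real {- K..K} x" for m x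
      proof -
        have "1/(real m+1) \<le> 1" by (simp add: field_simps)
        then have h: "a - 1 < A m" "B m < b + 1" using A[of m] B[of m] by linarith+
        have "{A m..B m} \<subseteq> {-K..K}" unfolding K_def
          using h abs_ge_self[of a] abs_ge_minus_self[of a] abs_ge_self[of b] abs_ge_minus_self[of b]
          by auto
        then show ?thesis by (auto simp: indicator_def)
      qed
      show "(\<lambda>m. indicat_real {A m..B m} x) \<longlonglongrightarrow> indicat_real {a..b} x" for x
      proof (cases "x < a")
        case True
        obtain N where N: "inverse (real (Suc N)) < a - x" using reals_Archimedean[of "a - x"] True by auto
        have "eventually (\<lambda>m. indicat_real {A m..B m} x = indicat_real {a..b} x) sequentially"
          unfolding eventually_sequentially
        proof (intro exI allI impI)
          fix m assume "N \<le> m"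
          then have "inverse (real (Suc m)) \<le> inverse (real (Suc N))" by (intro le_imp_inverse_le) auto
          moreover have "1/(real m + 1) = inverse (real (Suc m))" by (simp add: inverse_eq_divide)
          ultimately have "x < A m" using A[of m] N by linarith
          then show "indicat_real {A m..B m} x = indicat_real {a..b} x" using True by (simp add: indicator_def)
        qed
        then show ?thesis by (rule tendsto_eventually)
      next
        case False
        show ?thesis
        proof (cases "x > b")
          case True
          obtain N where N: "inverse (real (Suc N)) < x - b" using reals_Archimedean[of "x - b"] True by auto
          have "eventually (\<lambda>m. indicat_real {A m..B m} x = indicat_real {a..b} x) sequentially"
            unfolding eventually_sequentially
          proof (intro exI allI impI)
            fix m assume "N \<le> m"
            then have "inverse (real (Suc m)) \<le> inverse (real (Suc N))" by (intro le_imp_inverse_le) auto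
            moreover have "1/(real m + 1) = inverse (real (Suc m))" by (simp add: inverse_eq_divide)
            ultimately have "B m < x" using B[of m] N by linarith
            then show "indicat_real {A m..B m} x = indicat_real {a..b} x" using True by (simp add: indicator_def)
          qed
          then show ?thesis by (rule tendsto_eventually)
        next
          case False2: False
          have "indicat_real {A m..B m} x = indicat_real {a..b} x" for m
            using A[of m] B[of m] False False2 by (simp add: indicator_def)
          then show ?thesis by simp
        qed
      qed
    qed
    moreover have "integral\<^sup>L lborel (\<lambda>x. indicator {A m..B m} x *\<^sub>R r x) = 0" for m
      using zero[of "A m" "B m"] A[of m] B[of m] True by (simp add: set_lebesgue_integral_def)
    ultimately show ?thesis by (simp add: set_lebesgue_integral_def LIMSEQ_const_iff)
  qed
  have Z2: "AE x in lborel. indicator {- real M..real M} x *\<^sub>R r x = 0" for M :: nat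
  proof (rule sigma_finite_measure.density_zero[OF sigma_finite_lborel])
    let ?g = "\<lambda>x. indicator {- real M..real M} x *\<^sub>R r x"
    show ig: "integrable lborel ?g" using loc by (simp add: set_integrable_def)
    have g0: "integral\<^sup>L lborel ?g = 0" using Z1 by (simp add: set_lebesgue_integral_def)
    fix A :: "real set" assume "A \<in> sets lborel"
    then have "A \<in> sets borel" by simp
    then show "(LINT x:A|lborel. ?g x) = 0"
    proof (induction rule: borel_set_induct)
      case empty then show ?case by (simp add: set_lebesgue_integral_def)
    next
      case (interval a b)
      have eqf: "(\<lambda>x. indicator {a..b} x *\<^sub>R ?g x) = (\<lambda>x. indicator {max a (- real M)..min b (real M)} x *\<^sub>R r x)"
        by (auto simp: indicator_def fun_eq_iff)
      show ?case unfolding set_lebesgue_integral_def eqf using Z1[of "max a (- real M)" "min b (real M)"]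
        by (simp add: set_lebesgue_integral_def)
    next
      case (compl A)
      have iA: "integrable lborel (\<lambda>x. indicator A x *\<^sub>R ?g x)"
        by (rule integrable_mult_indicator[OF _ ig]) (use compl(1) in simp)
      have "(\<lambda>x. indicator (-A) x *\<^sub>R ?g x) = (\<lambda>x. ?g x - indicator A x *\<^sub>R ?g x)"
        by (auto simp: indicator_def fun_eq_iff)
      then have "(LINT x:(-A)|lborel. ?g x) = integral\<^sup>L lborel ?g - (LINT x:A|lborel. ?g x)"
        unfolding set_lebesgue_integral_def using ig iA by (simp add: Bochner_Integration.integral_diff)
      then show ?case using g0 compl(2) by simp
    next
      case (union F)
      have "(LINT x:(\<Union>i. F i)|lborel. ?g x) = (\<Sum>i. (LINT x:(F i)|lborel. ?g x))"
      proof (rule lebesgue_integral_countable_add)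
        show "\<And>i. F i \<in> sets lborel" using union(2) by simp
        show "\<And>i j. i \<noteq> j \<Longrightarrow> F i \<inter> F j = {}" using union(1) by (auto simp: disjoint_family_on_def)
        show "set_integrable lborel (\<Union>i. F i) ?g"
          unfolding set_integrable_def by (rule integrable_mult_indicator[OF _ ig]) (use union(2) in auto)
      qed
      then show ?case using union(3) by simp
    qed
  qed
  have "AE x in lborel. \<forall>M::nat. indicator {- real M..real M} x *\<^sub>R r x = 0"
    unfolding AE_all_countable using Z2 by blast
  then show ?thesis
  proof (rule AE_mp[OF _ AE_I2], intro impI)
    fix x assume H: "\<forall>M::nat. indicator {- real M..real M} x *\<^sub>R r x = 0"
    obtain M :: nat where "\<bar>x\<bar> \<le> real M" using real_arch_simple by blast
    then show "r x = 0" using H[rule_format, of M] by (simp add: indicator_def split: if_splits)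
  qed
qed

lemma loc_interval:
  fixes k :: "real \<Rightarrow> 'a::{banach, second_countable_topology}"
  assumes "\<And>a b. set_integrable lborel {a..b} k"
  shows "interval_lebesgue_integrable lborel (ereal u) (ereal v) k"
proof (cases "u \<le> v")
  case True
  have "set_integrable lborel {u<..<v} k"
    by (rule set_integrable_subset[OF assms[of u v]]) auto
  then show ?thesis using True by (simp add: interval_lebesgue_integrable_def)
next
  case False
  have "set_integrable lborel {v<..<u} k"
    by (rule set_integrable_subset[OF assms[of v u]]) auto
  then show ?thesis using False by (simp add: interval_lebesgue_integrable_def)
qed

lemma prel_deriv:
  fixes \<phi> \<phi>' :: "real \<Rightarrow> complex"
  assumes p: "p_rel f h"
    and fae: "AE x in lborel. f x = \<phi> x"
    and D: "\<And>x. (\<phi> has_vector_derivative \<phi>' x) (at x)"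
    and C: "continuous_on UNIV \<phi>'"
  shows "AE x in lborel. h x = - \<i> * \<phi>' x"
proof -
  from p obtain c where hL2: "h \<in> L2" and
    c: "AE x in lborel. f x = c + interval_lebesgue_integral lborel (ereal 0) (ereal x) (\<lambda>s. \<i> * h s)"
    unfolding p_rel_def by blast
  define k where "k = (\<lambda>s. \<i> * h s)"
  have kloc: "set_integrable lborel {a..b} k" for a b
    unfolding k_def using L2_local[OF hL2, of a b] by (rule set_integrable_mult_right)
  have kint: "interval_lebesgue_integrable lborel (ereal u) (ereal v) k" for u v
    by (rule loc_interval[OF kloc])
  define E where "E = {x. \<phi> x = c + (LBINT s=ereal 0..ereal x. k s)}"
  have AE: "AE x in lborel. x \<in> E"
    using c fae unfolding E_def k_def by eventually_elim auto
  have ploc: "set_integrable lborel {a..b} \<phi>'" for a b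
    by (rule borel_integrable_atLeastAtMost') (rule continuous_on_subset[OF C], auto)
  have "AE x in lborel. k x - \<phi>' x = 0"
  proof (rule Z[OF _ AE])
    show "set_integrable lborel {a..b} (\<lambda>x. k x - \<phi>' x)" for a b
      by (rule set_integral_diff(1)[OF kloc ploc])
    fix a b assume a: "a \<in> E" and b: "b \<in> E" and ab: "a < b"
    have "(LBINT s=ereal 0..ereal a. k s) + (LBINT s=ereal a..ereal b. k s) = (LBINT s=ereal 0..ereal b. k s)"
      by (rule interval_integral_sum) (simp add: kint flip: ereal_min ereal_max)
    then have Ik: "(LBINT s=ereal a..ereal b. k s) = \<phi> b - \<phi> a"
      using a b unfolding E_def by (simp add: algebra_simps)
    have Ip: "(LBINT s=ereal a..ereal b. \<phi>' s) = \<phi> b - \<phi> a"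
    proof (rule interval_integral_FTC_finite)
      show "continuous_on {min a b..max a b} \<phi>'" by (rule continuous_on_subset[OF C]) auto
      show "(\<phi> has_vector_derivative \<phi>' x) (at x within {min a b..max a b})" for x
        by (rule has_vector_derivative_at_within[OF D])
    qed
    have "(LINT x:{a..b}|lborel. k x - \<phi>' x) = (LINT x:{a..b}|lborel. k x) - (LINT x:{a..b}|lborel. \<phi>' x)"
      by (rule set_integral_diff(2)[OF kloc ploc])
    also have "\<dots> = (LBINT s=ereal a..ereal b. k s) - (LBINT s=ereal a..ereal b. \<phi>' s)"
      using ab by (simp add: interval_integral_Icc)
    also have "\<dots> = 0" using Ik Ip by simp
    finally show "(LINT x:{a..b}|lborel. k x - \<phi>' x) = 0" .
  qed
  then show ?thesis
  proof (rule AE_mp[OF _ AE_I2], intro impI)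
    fix x assume "k x - \<phi>' x = 0"
    then have "\<i> * h x = \<phi>' x" by (simp add: k_def)
    then have "- \<i> * (\<i> * h x) = - \<i> * \<phi>' x" by simp
    then show "h x = - \<i> * \<phi>' x" by (simp add: mult.assoc[symmetric])
  qed
qed

definition trap :: "real \<Rightarrow> real \<Rightarrow> real \<Rightarrow> real \<Rightarrow> real" where
  "trap a b d x = max 0 (min 1 (min ((x - (a - d))/d) ((b + d - x)/d)))"

definition trap' :: "real \<Rightarrow> real \<Rightarrow> real \<Rightarrow> real \<Rightarrow> real" where
  "trap' a b d x = (if a - d < x \<and> x < a then 1/d else if b < x \<and> x < b + d then -1/d else 0)"

lemma trap_cont: "continuous_on UNIV (trap a b d)"
  unfolding trap_def[abs_def] divide_inverse by (intro continuous_intros)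

lemma trap_meas[measurable]: "trap a b d \<in> borel_measurable borel"
  by (rule borel_measurable_continuous_onI[OF trap_cont])

lemma trap'_meas[measurable]: "trap' a b d \<in> borel_measurable borel"
  unfolding trap'_def[abs_def] by measurable

lemma trap_bounds: assumes "d > 0" shows "0 \<le> trap a b d x" "trap a b d x \<le> 1"
  unfolding trap_def by auto

lemma trap_outside:
  assumes d: "d > 0" and x: "x \<notin> {a-d..b+d}" shows "trap a b d x = 0"
proof -
  have "(x - (a - d))/d < 0 \<or> (b + d - x)/d < 0" using x d by (auto simp: divide_less_0_iff)
  then show ?thesis unfolding trap_def by auto
qed

lemma trap'_outside:
  assumes d: "d > 0" and ab: "a < b" and x: "x \<notin> {a-d..b+d}" shows "trap' a b d x = 0"
  using x d ab unfolding trap'_def by auto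

lemma trap_inside:
  assumes d: "d > 0" and x: "a \<le> x" "x \<le> b" shows "trap a b d x = 1"
proof -
  have "1 \<le> (x - (a - d))/d" "1 \<le> (b + d - x)/d" using x d by (auto simp: field_simps)
  then show ?thesis unfolding trap_def by auto
qed

lemma trap_deriv:
  assumes d: "d > 0" and ab: "a < b" and x: "x \<notin> {a-d, a, b, b+d}"
  shows "(trap a b d has_real_derivative trap' a b d x) (at x)"
proof -
  consider "x < a - d" | "a - d < x \<and> x < a" | "a < x \<and> x < b" | "b < x \<and> x < b + d" | "b + d < x"
    using x by fastforce
  then show ?thesis
  proof cases
    case 1
    show ?thesis
    proof (rule has_field_derivative_transform_within_open[where S = "{..<a-d}"])
      show "((\<lambda>_. 0) has_real_derivative trap' a b d x) (at x)" using 1 ab d by (simp add: trap'_def)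
      show "\<And>y. y \<in> {..<a-d} \<Longrightarrow> 0 = trap a b d y" using d ab by (intro trap_outside[symmetric]) auto
    qed (use 1 in auto)
  next
    case 2
    show ?thesis
    proof (rule has_field_derivative_transform_within_open[where S = "{a-d<..<a}"])
      show "((\<lambda>y. (y - (a - d))/d) has_real_derivative trap' a b d x) (at x)"
        using 2 d by (auto simp: trap'_def intro!: derivative_eq_intros)
      show "(y - (a - d))/d = trap a b d y" if "y \<in> {a-d<..<a}" for y
      proof -
        have "y - (a - d) \<le> b + d - y" using that ab by auto
        then have "(y - (a - d))/d \<le> (b + d - y)/d" using d by (intro divide_right_mono) auto
        moreover have "(y - (a - d))/d \<le> 1" "0 \<le> (y - (a - d))/d"
          using that d ab by (auto simp: field_simps)
        ultimately have "(y - (a - d))/d \<le> 1" "(y - (a - d))/d \<le> (b + d - y)/d" "0 \<le> (y - (a - d))/d"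
          by auto
        then show ?thesis unfolding trap_def by auto
      qed
    qed (use 2 in auto)
  next
    case 3
    show ?thesis
    proof (rule has_field_derivative_transform_within_open[where S = "{a<..<b}"])
      show "((\<lambda>_. 1) has_real_derivative trap' a b d x) (at x)" using 3 d by (simp add: trap'_def)
      show "1 = trap a b d y" if "y \<in> {a<..<b}" for y using that d by (intro trap_inside[symmetric]) auto
    qed (use 3 in auto)
  next
    case 4
    show ?thesis
    proof (rule has_field_derivative_transform_within_open[where S = "{b<..<b+d}"])
      show "((\<lambda>y. (b + d - y)/d) has_real_derivative trap' a b d x) (at x)"
        using 4 d ab by (auto simp: trap'_def intro!: derivative_eq_intros)
      show "(b + d - y)/d = trap a b d y" if "y \<in> {b<..<b+d}" for y
      proof -
        have "b + d - y \<le> y - (a - d)" using that ab by auto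
        then have "(b + d - y)/d \<le> (y - (a - d))/d" using d by (intro divide_right_mono) auto
        moreover have "(b + d - y)/d \<le> 1" "0 \<le> (b + d - y)/d"
          using that d ab by (auto simp: field_simps)
        ultimately have "(b + d - y)/d \<le> 1" "(b + d - y)/d \<le> (y - (a - d))/d" "0 \<le> (b + d - y)/d"
          by auto
        then show ?thesis unfolding trap_def by auto
      qed
    qed (use 4 in auto)
  next
    case 5
    show ?thesis
    proof (rule has_field_derivative_transform_within_open[where S = "{b+d<..}"])
      show "((\<lambda>_. 0) has_real_derivative trap' a b d x) (at x)" using 5 ab d by (simp add: trap'_def)
      show "\<And>y. y \<in> {b+d<..} \<Longrightarrow> 0 = trap a b d y" using d ab by (intro trap_outside[symmetric]) auto
    qed (use 5 in auto)
  qed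
qed

lemma trap'_int: assumes d: "d > 0" and ab: "a < b" shows "integrable lborel (trap' a b d)"
proof -
  have "trap' a b d = (\<lambda>x. (1/d) * indicator {a-d<..<a} x - (1/d) * indicator {b<..<b+d} x)"
    using d ab by (auto simp: trap'_def indicator_def fun_eq_iff)
  moreover have "integrable lborel (\<lambda>x. (1/d) * indicator {a-d<..<a} x - (1/d) * indicator {b<..<b+d} x :: real)"
    by (intro Bochner_Integration.integrable_diff integrable_mult_right integrable_real_indicator) (use d in auto)
  ultimately show ?thesis by simp
qed

lemma trap_FTC:
  assumes d: "d > 0" and ab: "a < b"
  shows "(LBINT s=ereal u..ereal v. trap' a b d s) = trap a b d v - trap a b d u"
proof -
  have main: "(LBINT s=ereal u..ereal v. trap' a b d s) = trap a b d v - trap a b d u" if uv: "u \<le> v" for u v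
  proof -
    have "(trap' a b d has_integral (trap a b d v - trap a b d u)) {u..v}"
    proof (rule fundamental_theorem_of_calculus_interior_strong[where S = "{a-d, a, b, b+d}"])
      show "(trap a b d has_vector_derivative trap' a b d x) (at x)" if "x \<in> {u<..<v} - {a-d, a, b, b+d}" for x
        using trap_deriv[OF d ab, of x] that by (simp add: has_real_derivative_iff_has_vector_derivative)
      show "continuous_on {u..v} (trap a b d)" by (rule continuous_on_subset[OF trap_cont]) auto
    qed (use uv in auto)
    moreover have si: "set_integrable lborel {u..v} (trap' a b d)"
      unfolding set_integrable_def by (rule integrable_mult_indicator) (auto intro: trap'_int[OF d ab])
    ultimately have "(LBINT s:{u..v}. trap' a b d s) = trap a b d v - trap a b d u"
      using set_borel_integral_eq_integral(2)[OF si] by (simp add: integral_unique)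
    then show ?thesis using uv by (simp add: interval_integral_Icc)
  qed
  show ?thesis
  proof (cases "u \<le> v")
    case True then show ?thesis by (rule main)
  next
    case False
    then have "(LBINT s=ereal v..ereal u. trap' a b d s) = trap a b d u - trap a b d v" by (intro main) auto
    then show ?thesis by (subst interval_integral_endpoints_reverse) simp
  qed
qed

definition dG :: "real \<Rightarrow> real poly \<Rightarrow> real poly" where
  "dG c R = pderiv R - smult (2*c) (pCons 0 R)"

definition divx :: "real poly \<Rightarrow> real poly" where
  "divx p = poly_shift 1 p"

lemma divx_eq: assumes "coeff p 0 = 0" shows "poly p x = x * poly (divx p) x"
proof -
  have "p = pCons 0 (divx p)"
    using assms by (auto simp: poly_eq_iff divx_def coeff_poly_shift coeff_pCons split: nat.splits)
  then have "poly p x = poly (pCons 0 (divx p)) x" by simp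
  then show ?thesis by simp
qed

lemma pg_deriv:
  "((\<lambda>x. poly R x * exp (- c * x\<^sup>2)) has_real_derivative poly (dG c R) x * exp (- c * x\<^sup>2)) (at x)"
proof -
  have "((\<lambda>x. poly R x * exp (- c * x\<^sup>2)) has_real_derivative
        poly (pderiv R) x * exp (- c * x\<^sup>2) + exp (- c * x\<^sup>2) * (- c * (2 * x)) * poly R x) (at x)"
    by (rule DERIV_mult[OF poly_DERIV]) (auto intro!: derivative_eq_intros)
  moreover have "poly (pderiv R) x * exp (- c * x\<^sup>2) + exp (- c * x\<^sup>2) * (- c * (2 * x)) * poly R x
     = poly (dG c R) x * exp (- c * x\<^sup>2)"
    by (simp add: dG_def algebra_simps)
  ultimately show ?thesis by simp
qed

lemma pg_vderiv:
  "((\<lambda>x. a * complex_of_real (poly R x * exp (- c * x\<^sup>2))) has_vector_derivative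
     a * complex_of_real (poly (dG c R) x * exp (- c * x\<^sup>2))) (at x)"
  by (intro has_vector_derivative_mult_right has_vector_derivative_of_real pg_deriv)

lemma pg_cont: "continuous_on UNIV (\<lambda>x. a * complex_of_real (poly R x * exp (- c * x\<^sup>2)))"
  by (intro continuous_intros)

lemma pg_meas[measurable]: "(\<lambda>x. a * complex_of_real (poly R x * exp (- c * x\<^sup>2))) \<in> borel_measurable borel"
  by (rule borel_measurable_continuous_onI[OF pg_cont])

lemma pg_L2: assumes c: "c > 0"
  shows "(\<lambda>x. a * complex_of_real (poly R x * exp (- c * x\<^sup>2))) \<in> L2"
proof -
  have I: "integrable lborel (\<lambda>x. (cmod a)^2 * (poly (R * R) x * exp (- (2*c) * x\<^sup>2)))"
    using c by (intro integrable_mult_right gauss_poly_int) auto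
  have eq: "(cmod a)^2 * (poly (R * R) x * exp (- (2*c) * x\<^sup>2)) = (cmod (a * complex_of_real (poly R x * exp (- c * x\<^sup>2))))^2" for x
  proof -
    have "exp (- (2*c) * x\<^sup>2) = (exp (- c * x\<^sup>2))^2" by (simp add: power2_eq_square exp_add[symmetric])
    then show ?thesis by (simp add: norm_mult power_mult_distrib abs_mult power2_eq_square)
  qed
  have "integrable lborel (\<lambda>x. (cmod (a * complex_of_real (poly R x * exp (- c * x\<^sup>2))))^2)"
    using I unfolding eq .
  moreover have "(\<lambda>x. a * complex_of_real (poly R x * exp (- c * x\<^sup>2))) \<in> borel_measurable lborel"
    using pg_meas by simp
  ultimately show ?thesis unfolding L2_def by blast
qed

definition T1 :: "real \<Rightarrow> real poly \<Rightarrow> real poly" where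
  "T1 c P = divx (pderiv P) - smult (2*c) P"

definition T2 :: "real \<Rightarrow> real poly \<Rightarrow> real poly" where
  "T2 c Q = dG c (divx Q)"

lemma t_step:
  assumes c: "c > 0" and t: "t_rel f g"
    and fae: "AE x in lborel. f x = a * complex_of_real (poly P x * exp (- c * x\<^sup>2))"
    and P1: "coeff P 1 = 0"
  shows "AE x in lborel. g x = (- \<i> * a) * complex_of_real (poly (T1 c P) x * exp (- c * x\<^sup>2))"
proof -
  from t obtain h where p: "p_rel f h" and q: "qinv_rel h g" unfolding t_rel_def by blast
  have hae: "AE x in lborel. h x = - \<i> * (a * complex_of_real (poly (dG c P) x * exp (- c * x\<^sup>2)))"
    by (rule prel_deriv[OF p fae pg_vderiv]) (intro continuous_intros)
  from q have gae: "AE x in lborel. g x = h x / complex_of_real x" unfolding qinv_rel_def by blast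
  have d0: "coeff (pderiv P) 0 = 0" using P1 by (simp add: coeff_pderiv)
  show ?thesis
    using hae gae AE_lborel_singleton[of 0]
  proof eventually_elim
    case (elim x)
    have "poly (dG c P) x = x * poly (T1 c P) x"
      unfolding dG_def T1_def using divx_eq[OF d0, of x] by (simp add: algebra_simps)
    then show ?case using elim by (simp add: field_simps)
  qed
qed

lemma pgr_cont: fixes R :: "real poly" shows "continuous_on UNIV (\<lambda>x. poly R x * exp (- c * x\<^sup>2))"
proof -
  have "isCont (\<lambda>x. poly R x * exp (- c * x\<^sup>2)) x" for x
    using pg_deriv[of R c x] by (rule DERIV_isCont)
  then show ?thesis by (simp add: continuous_on_eq_continuous_at)
qed

lemma pgr_meas[measurable]: fixes R :: "real poly" shows "(\<lambda>x. poly R x * exp (- c * x\<^sup>2)) \<in> borel_measurable borel"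
  by (intro borel_measurable_continuous_onI pgr_cont)

lemma L2_bounded:
  assumes m: "f \<in> borel_measurable borel" and C: "C \<ge> 0"
    and b: "\<And>x. (cmod (f x))^2 \<le> C * indicator {l..r} x"
  shows "f \<in> L2"
proof -
  have "integrable lborel (\<lambda>x. (cmod (f x))^2)"
  proof (rule Bochner_Integration.integrable_bound)
    show "integrable lborel (\<lambda>x. C * indicator {l..r} x :: real)"
      by (intro integrable_mult_right integrable_real_indicator) (auto simp: emeasure_lborel_Icc_eq)
    show "(\<lambda>x. (cmod (f x))^2) \<in> borel_measurable lborel" using m by measurable
    show "AE x in lborel. norm ((cmod (f x))^2) \<le> norm (C * indicator {l..r} x :: real)"
      using b C by (intro AE_I2) (auto simp: abs_mult)
  qed
  then show ?thesis using m by (simp add: L2_def)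
qed

lemma L2_diff:
  assumes f: "f \<in> L2" and g: "g \<in> L2" shows "(\<lambda>x. f x - g x) \<in> L2"
proof -
  have "integrable lborel (\<lambda>x. (cmod (f x - g x))^2)"
  proof (rule Bochner_Integration.integrable_bound)
    show "integrable lborel (\<lambda>x. 2 * (cmod (f x))^2 + 2 * (cmod (g x))^2)"
      using L2_sq_int[OF f] L2_sq_int[OF g] by auto
    show "(\<lambda>x. (cmod (f x - g x))^2) \<in> borel_measurable lborel" using L2_meas[OF f] L2_meas[OF g] by measurable
    show "AE x in lborel. norm ((cmod (f x - g x))^2) \<le> norm (2 * (cmod (f x))^2 + 2 * (cmod (g x))^2)"
    proof (intro AE_I2)
      fix x
      have t: "cmod (f x - g x) \<le> cmod (f x) + cmod (g x)" by (rule norm_triangle_ineq4)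
      have "(cmod (f x - g x))^2 \<le> (cmod (f x) + cmod (g x))^2"
        using t by (intro power_mono) auto
      also have "\<dots> \<le> 2 * (cmod (f x))^2 + 2 * (cmod (g x))^2"
      proof -
        have "0 \<le> (cmod (f x) - cmod (g x))^2" by simp
        then show ?thesis by (simp add: power2_eq_square algebra_simps)
      qed
      finally show "norm ((cmod (f x - g x))^2) \<le> norm (2 * (cmod (f x))^2 + 2 * (cmod (g x))^2)" by simp
    qed
  qed
  moreover have "(\<lambda>x. f x - g x) \<in> borel_measurable lborel" using L2_meas[OF f] L2_meas[OF g] by measurable
  ultimately show ?thesis by (simp add: L2_def)
qed

lemma L2_cnj: assumes f: "f \<in> L2" shows "(\<lambda>x. cnj (f x)) \<in> L2"
  using f unfolding L2_def by auto

lemma trap_IBP: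
  assumes d: "d > 0" and ab: "a < b" and c: "c > 0"
  shows "integral\<^sup>L lborel (\<lambda>x. trap' a b d x * (poly R x * exp (- c * x\<^sup>2)))
       + integral\<^sup>L lborel (\<lambda>x. trap a b d x * (poly (dG c R) x * exp (- c * x\<^sup>2))) = 0"
proof -
  let ?\<phi> = "\<lambda>x. poly R x * exp (- c * x\<^sup>2)"
  let ?\<phi>' = "\<lambda>x. poly (dG c R) x * exp (- c * x\<^sup>2)"
  let ?F' = "\<lambda>x. trap' a b d x * ?\<phi> x + trap a b d x * ?\<phi>' x"
  have i1: "integrable lborel (\<lambda>x. trap' a b d x * ?\<phi> x)"
  proof (rule Bochner_Integration.integrable_bound)
    show "integrable lborel (\<lambda>x. (1/d) * \<bar>?\<phi> x\<bar>)"
      by (intro integrable_mult_right integrable_abs gauss_poly_int c)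
    show "(\<lambda>x. trap' a b d x * ?\<phi> x) \<in> borel_measurable lborel"
      by measurable
    show "AE x in lborel. norm (trap' a b d x * ?\<phi> x) \<le> norm ((1/d) * \<bar>?\<phi> x\<bar>)"
      using d by (intro AE_I2) (auto simp: trap'_def abs_mult)
  qed
  have i2: "integrable lborel (\<lambda>x. trap a b d x * ?\<phi>' x)"
  proof (rule Bochner_Integration.integrable_bound)
    show "integrable lborel (\<lambda>x. \<bar>?\<phi>' x\<bar>)"
      by (intro integrable_abs gauss_poly_int c)
    show "(\<lambda>x. trap a b d x * ?\<phi>' x) \<in> borel_measurable lborel"
      by measurable
    show "AE x in lborel. norm (trap a b d x * ?\<phi>' x) \<le> norm (\<bar>?\<phi>' x\<bar>)"
    proof (intro AE_I2)
      fix x show "norm (trap a b d x * ?\<phi>' x) \<le> norm (\<bar>?\<phi>' x\<bar>)"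
        using trap_bounds[OF d, of a b x] by (simp add: abs_mult mult_left_le_one_le)
    qed
  qed
  have iF: "integrable lborel ?F'" using i1 i2 by simp
  have hi: "(?F' has_integral (trap a b d (b+d) * ?\<phi> (b+d) - trap a b d (a-d) * ?\<phi> (a-d))) {a-d..b+d}"
  proof (rule fundamental_theorem_of_calculus_interior_strong[where S = "{a-d, a, b, b+d}"])
    show "((\<lambda>x. trap a b d x * ?\<phi> x) has_vector_derivative ?F' x) (at x)" if "x \<in> {a-d<..<b+d} - {a-d, a, b, b+d}" for x
    proof -
      have "((\<lambda>x. trap a b d x * ?\<phi> x) has_real_derivative trap' a b d x * ?\<phi> x + ?\<phi>' x * trap a b d x) (at x)"
        using that by (intro DERIV_mult trap_deriv[OF d ab] pg_deriv) auto
      then show ?thesis by (simp add: has_real_derivative_iff_has_vector_derivative mult.commute)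
    qed
    show "continuous_on {a-d..b+d} (\<lambda>x. trap a b d x * ?\<phi> x)"
      by (intro continuous_intros continuous_on_subset[OF trap_cont]) auto
  qed (use d ab in auto)
  have e1: "trap a b d (b+d) = 0" "trap a b d (a-d) = 0" unfolding trap_def by auto
  have hi0: "(?F' has_integral 0) {a-d..b+d}" using hi e1 by simp
  have si: "set_integrable lborel {a-d..b+d} ?F'"
    unfolding set_integrable_def by (rule integrable_mult_indicator[OF _ iF]) simp
  have "integral\<^sup>L lborel ?F' = (LINT x:{a-d..b+d}|lborel. ?F' x)"
    unfolding set_lebesgue_integral_def
  proof (rule Bochner_Integration.integral_cong[OF refl])
    fix x show "?F' x = indicator {a-d..b+d} x *\<^sub>R ?F' x"
    proof (cases "x \<in> {a-d..b+d}")
      case False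
      then show ?thesis using trap_outside[OF d False] trap'_outside[OF d ab False] by simp
    qed simp
  qed
  also have "\<dots> = integral {a-d..b+d} ?F'" by (rule set_borel_integral_eq_integral(2)[OF si])
  also have "\<dots> = 0" using hi0 by (rule integral_unique)
  finally show ?thesis using i1 i2 by simp
qed

lemma trap_test:
  fixes a0 :: complex and Q :: "real poly"
  assumes c: "c > 0" and tadj: "tadj_rel g w"
    and gae: "AE x in lborel. g x = a0 * complex_of_real (poly Q x * exp (- c * x\<^sup>2))"
    and Q0: "coeff Q 0 = 0"
    and d: "d > 0" and ab: "a < b" and mu: "\<mu> > 0" and ramp: "\<And>x. trap' a b d x \<noteq> 0 \<Longrightarrow> \<mu> \<le> \<bar>x\<bar>"
  shows "integral\<^sup>L lborel (\<lambda>x. trap a b d x *\<^sub>R cnj (w x - (- \<i> * a0) * complex_of_real (poly (T2 c Q) x * exp (- c * x\<^sup>2)))) = 0"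
proof -
  define f where "f = (\<lambda>x. complex_of_real (trap a b d x))"
  define h where "h = (\<lambda>x. - \<i> * complex_of_real (trap' a b d x))"
  define u where "u = (\<lambda>x. h x / complex_of_real x)"
  define R where "R = divx Q"
  define w0 where "w0 = (\<lambda>x. (- \<i> * a0) * complex_of_real (poly (T2 c Q) x * exp (- c * x\<^sup>2)))"
  have tr0: "trap' a b d 0 = 0" using ramp[of 0] mu by force
  have gL2: "g \<in> L2" and wL2: "w \<in> L2" and adj: "\<And>f u. t_rel f u \<Longrightarrow> L2_inner u g = L2_inner f w"
    using tadj unfolding tadj_rel_def by auto
  have w0L2: "w0 \<in> L2" unfolding w0_def by (rule pg_L2[OF c])
  have fL2: "f \<in> L2"
  proof (rule L2_bounded[where C = 1 and l = "a-d" and r = "b+d"])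
    show "f \<in> borel_measurable borel" unfolding f_def by measurable
    show "(cmod (f x))^2 \<le> 1 * indicator {a-d..b+d} x" for x
    proof (cases "x \<in> {a-d..b+d}")
      case True
      have "(trap a b d x)^2 \<le> 1" using trap_bounds[OF d, of a b x] by (simp add: power_le_one)
      then show ?thesis using True by (simp add: f_def)
    next
      case False then show ?thesis using trap_outside[OF d False] by (simp add: f_def)
    qed
  qed simp
  have hL2: "h \<in> L2"
  proof (rule L2_bounded[where C = "(1/d)^2" and l = "a-d" and r = "b+d"])
    show "h \<in> borel_measurable borel" unfolding h_def by measurable
    show "(cmod (h x))^2 \<le> (1/d)^2 * indicator {a-d..b+d} x" for x
    proof (cases "x \<in> {a-d..b+d}")
      case True
      have "\<bar>trap' a b d x\<bar> \<le> 1/d" using d by (auto simp: trap'_def)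
      then have "(trap' a b d x)^2 \<le> (1/d)^2" by (metis abs_le_square_iff abs_of_pos d zero_less_divide_1_iff)
      then show ?thesis using True by (simp add: h_def norm_mult)
    next
      case False then show ?thesis using trap'_outside[OF d ab False] by (simp add: h_def)
    qed
  qed simp
  have uL2: "u \<in> L2"
  proof (rule L2_bounded[where C = "(1/(d*\<mu>))^2" and l = "a-d" and r = "b+d"])
    show "u \<in> borel_measurable borel" unfolding u_def h_def by measurable
    show "(cmod (u x))^2 \<le> (1/(d*\<mu>))^2 * indicator {a-d..b+d} x" for x
    proof (cases "x \<in> {a-d..b+d} \<and> trap' a b d x \<noteq> 0")
      case True
      then have mx: "\<mu> \<le> \<bar>x\<bar>" using ramp by auto
      have t: "\<bar>trap' a b d x\<bar> \<le> 1/d" using d by (auto simp: trap'_def)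
      have "cmod (u x) = \<bar>trap' a b d x\<bar> / \<bar>x\<bar>" by (simp add: u_def h_def norm_mult norm_divide)
      also have "\<dots> \<le> (1/d) / \<mu>" using t mx mu d by (intro frac_le) auto
      finally have "cmod (u x) \<le> 1/(d*\<mu>)" by simp
      then have "(cmod (u x))^2 \<le> (1/(d*\<mu>))^2" by (intro power_mono) auto
      then show ?thesis using True by simp
    next
      case False
      then have "u x = 0 \<or> x \<notin> {a-d..b+d}" by (auto simp: u_def h_def)
      moreover have "x \<notin> {a-d..b+d} \<Longrightarrow> u x = 0" using trap'_outside[OF d ab] by (simp add: u_def h_def)
      ultimately show ?thesis by auto
    qed
  qed simp
  have pr: "p_rel f h"
    unfolding p_rel_def
  proof (intro conjI fL2 hL2 exI[of _ "complex_of_real (trap a b d 0)"] AE_I2)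
    fix x
    have "(\<lambda>s. \<i> * h s) = (\<lambda>s. complex_of_real (trap' a b d s))" by (auto simp: h_def fun_eq_iff)
    then have "interval_lebesgue_integral lborel (ereal 0) (ereal x) (\<lambda>s. \<i> * h s)
       = complex_of_real (trap a b d x - trap a b d 0)"
      by (simp add: interval_lebesgue_integral_of_real trap_FTC[OF d ab])
    then show "f x = complex_of_real (trap a b d 0) + interval_lebesgue_integral lborel (ereal 0) (ereal x) (\<lambda>s. \<i> * h s)"
      by (simp add: f_def)
  qed
  have qr: "qinv_rel h u" unfolding qinv_rel_def using hL2 uL2 by (simp add: u_def)
  have tr: "t_rel f u" unfolding t_rel_def using pr qr by blast
  have eqi: "L2_inner u g = L2_inner f w" by (rule adj[OF tr])
  let ?\<phi> = "\<lambda>x. poly R x * exp (- c * x\<^sup>2)"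
  have QR: "poly Q x = x * poly R x" for x unfolding R_def by (rule divx_eq[OF Q0])
  have "L2_inner u g = integral\<^sup>L lborel (\<lambda>x. (- \<i> * cnj a0) * complex_of_real (trap' a b d x * ?\<phi> x))"
    unfolding L2_inner_def
  proof (rule integral_cong_AE)
    show "(\<lambda>x. u x * cnj (g x)) \<in> borel_measurable lborel"
      using L2_prod_int[OF uL2 gL2] by auto
    show "(\<lambda>x. (- \<i> * cnj a0) * complex_of_real (trap' a b d x * ?\<phi> x)) \<in> borel_measurable lborel"
      by measurable
    show "AE x in lborel. u x * cnj (g x) = (- \<i> * cnj a0) * complex_of_real (trap' a b d x * ?\<phi> x)"
      using gae
    proof eventually_elim
      case (elim x)
      show ?case
      proof (cases "x = 0")
        case True then show ?thesis by (simp add: u_def tr0)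
      next
        case False
        then show ?thesis using elim by (simp add: u_def h_def QR field_simps)
      qed
    qed
  qed
  also have "\<dots> = (- \<i> * cnj a0) * complex_of_real (integral\<^sup>L lborel (\<lambda>x. trap' a b d x * ?\<phi> x))"
    by (simp only: integral_mult_right_zero integral_complex_of_real)
  finally have lhs: "L2_inner u g = (- \<i> * cnj a0) * complex_of_real (integral\<^sup>L lborel (\<lambda>x. trap' a b d x * ?\<phi> x))" .
  have "L2_inner f w0 = integral\<^sup>L lborel (\<lambda>x. (\<i> * cnj a0) * complex_of_real (trap a b d x * (poly (dG c R) x * exp (- c * x\<^sup>2))))"
    unfolding L2_inner_def
    by (rule Bochner_Integration.integral_cong[OF refl]) (simp add: f_def w0_def T2_def R_def)
  also have "\<dots> = (\<i> * cnj a0) * complex_of_real (integral\<^sup>L lborel (\<lambda>x. trap a b d x * (poly (dG c R) x * exp (- c * x\<^sup>2))))"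
    by (simp only: integral_mult_right_zero integral_complex_of_real)
  finally have rhs: "L2_inner f w0 = (\<i> * cnj a0) * complex_of_real (integral\<^sup>L lborel (\<lambda>x. trap a b d x * (poly (dG c R) x * exp (- c * x\<^sup>2))))" .
  have ibp: "integral\<^sup>L lborel (\<lambda>x. trap' a b d x * ?\<phi> x) = - integral\<^sup>L lborel (\<lambda>x. trap a b d x * (poly (dG c R) x * exp (- c * x\<^sup>2)))"
    using trap_IBP[OF d ab c, of R] by simp
  have "L2_inner f w = L2_inner f w0" using eqi lhs rhs ibp by simp
  then have "integral\<^sup>L lborel (\<lambda>x. f x * cnj (w x)) - integral\<^sup>L lborel (\<lambda>x. f x * cnj (w0 x)) = 0"
    unfolding L2_inner_def by simp
  then have "integral\<^sup>L lborel (\<lambda>x. f x * cnj (w x) - f x * cnj (w0 x)) = 0"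
    by (subst Bochner_Integration.integral_diff[OF L2_prod_int[OF fL2 wL2] L2_prod_int[OF fL2 w0L2]])
  moreover have "(\<lambda>x. f x * cnj (w x) - f x * cnj (w0 x)) = (\<lambda>x. trap a b d x *\<^sub>R cnj (w x - w0 x))"
    by (auto simp: fun_eq_iff f_def scaleR_conv_of_real algebra_simps)
  ultimately show ?thesis unfolding w0_def by simp
qed

lemma tadj_step:
  fixes a0 :: complex and Q :: "real poly"
  assumes c: "c > 0" and tadj: "tadj_rel g w"
    and gae: "AE x in lborel. g x = a0 * complex_of_real (poly Q x * exp (- c * x\<^sup>2))"
    and Q0: "coeff Q 0 = 0"
  shows "AE x in lborel. w x = (- \<i> * a0) * complex_of_real (poly (T2 c Q) x * exp (- c * x\<^sup>2))"
proof -
  define w0 where "w0 = (\<lambda>x. (- \<i> * a0) * complex_of_real (poly (T2 c Q) x * exp (- c * x\<^sup>2)))"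
  define r where "r = (\<lambda>x. cnj (w x - w0 x))"
  have wL2: "w \<in> L2" using tadj unfolding tadj_rel_def by auto
  have w0L2: "w0 \<in> L2" unfolding w0_def by (rule pg_L2[OF c])
  have rL2: "r \<in> L2" unfolding r_def by (intro L2_cnj L2_diff wL2 w0L2)
  have "AE x in lborel. r x = 0"
  proof (rule Z[where E = "{x. x \<noteq> 0}"])
    show "set_integrable lborel {a..b} r" for a b by (rule L2_local[OF rL2])
    show "AE x in lborel. x \<in> {x. x \<noteq> 0}" using AE_lborel_singleton[of 0] by simp
    fix a1 b1 :: real assume a1: "a1 \<in> {x. x \<noteq> 0}" and b1: "b1 \<in> {x. x \<noteq> 0}" and ab: "a1 < b1"
    define \<delta> where "\<delta> = min \<bar>a1\<bar> \<bar>b1\<bar> / 2"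
    have \<delta>: "\<delta> > 0" using a1 b1 by (simp add: \<delta>_def)
    define dm where "dm = (\<lambda>m::nat. \<delta> / (real m + 1))"
    have dm: "0 < dm m" "dm m \<le> \<delta>" for m using \<delta> by (auto simp: dm_def field_simps)
    have ramp: "\<delta> \<le> \<bar>x\<bar>" if "trap' a1 b1 (dm m) x \<noteq> 0" for m x
    proof -
      have "(a1 - dm m < x \<and> x < a1) \<or> (b1 < x \<and> x < b1 + dm m)"
        using that by (auto simp: trap'_def split: if_splits)
      moreover have "\<delta> \<le> \<bar>a1\<bar>/2" "\<delta> \<le> \<bar>b1\<bar>/2" by (auto simp: \<delta>_def)
      ultimately show ?thesis using dm[of m] \<delta> by (auto simp: abs_if split: if_splits)
    qed
    have zero_m: "integral\<^sup>L lborel (\<lambda>x. trap a1 b1 (dm m) x *\<^sub>R r x) = 0" for m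
      unfolding r_def w0_def by (rule trap_test[OF c tadj gae Q0 dm(1) ab \<delta> ramp])
    define K where "K = \<bar>a1\<bar> + \<bar>b1\<bar> + \<delta> + 1"
    have dm0: "dm \<longlonglongrightarrow> 0"
      unfolding dm_def by real_asymp
    have lim: "(\<lambda>m. integral\<^sup>L lborel (\<lambda>x. trap a1 b1 (dm m) x *\<^sub>R r x)) \<longlonglongrightarrow>
               integral\<^sup>L lborel (\<lambda>x. indicator {a1..b1} x *\<^sub>R r x)"
    proof (rule DCT_ind[where K = K])
      show "set_integrable lborel {-K..K} r" by (rule L2_local[OF rL2])
      show "\<And>m. trap a1 b1 (dm m) \<in> borel_measurable borel" by simp
      show "indicat_real {a1..b1} \<in> borel_measurable borel" by simp
      show "\<bar>trap a1 b1 (dm m) x\<bar> \<le> indicat_real {- K..K} x" for m x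
      proof (cases "x \<in> {a1 - dm m..b1 + dm m}")
        case True
        then have "x \<in> {-K..K}" using dm[of m] by (auto simp: K_def)
        then show ?thesis using trap_bounds[OF dm(1)[of m], of a1 b1 x] by auto
      next
        case False then show ?thesis using trap_outside[OF dm(1) False] by simp
      qed
      show "(\<lambda>m. trap a1 b1 (dm m) x) \<longlonglongrightarrow> indicat_real {a1..b1} x" for x
      proof (cases "x < a1")
        case True
        have "eventually (\<lambda>m. dm m < a1 - x) sequentially"
          using order_tendstoD(2)[OF dm0, of "a1 - x"] True by simp
        then have "eventually (\<lambda>m. trap a1 b1 (dm m) x = indicat_real {a1..b1} x) sequentially"
        proof eventually_elim
          case (elim m)
          then have "x \<notin> {a1 - dm m..b1 + dm m}" by auto
          then show ?case using trap_outside[OF dm(1)] True by simp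
        qed
        then show ?thesis by (rule tendsto_eventually)
      next
        case False
        show ?thesis
        proof (cases "x > b1")
          case True
          have "eventually (\<lambda>m. dm m < x - b1) sequentially"
            using order_tendstoD(2)[OF dm0, of "x - b1"] True by simp
          then have "eventually (\<lambda>m. trap a1 b1 (dm m) x = indicat_real {a1..b1} x) sequentially"
          proof eventually_elim
            case (elim m)
            then have "x \<notin> {a1 - dm m..b1 + dm m}" by auto
            then show ?case using trap_outside[OF dm(1)] True by simp
          qed
          then show ?thesis by (rule tendsto_eventually)
        next
          case False2: False
          have "trap a1 b1 (dm m) x = indicat_real {a1..b1} x" for m
            using trap_inside[OF dm(1)[of m], of a1 x b1] False False2 by simp
          then show ?thesis by simp
        qed
      qed
    qed
    then show "(LINT x:{a1..b1}|lborel. r x) = 0"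
      unfolding zero_m set_lebesgue_integral_def by (simp add: LIMSEQ_const_iff)
  qed
  then show ?thesis
  proof eventually_elim
    case (elim x)
    then have "w x - w0 x = 0" unfolding r_def by (simp only: complex_cnj_zero_iff)
    then have "w x = w0 x" by (simp only: right_minus_eq)
    then show ?case by (simp only: w0_def)
  qed
qed

definition Hs :: "real \<Rightarrow> nat \<Rightarrow> real poly" where
  "Hs s n = pcompose (hp n) [:0, 1/s:]"

lemma poly_Hs: "poly (Hs s n) x = hermite n (x/s)"
  by (simp add: Hs_def poly_pcompose poly_hp)

lemma degree_Hs: assumes "s > 0" shows "degree (Hs s n) = n"
  using assms by (simp add: Hs_def degree_pcompose degree_hp)

definition par :: "real poly \<Rightarrow> real \<Rightarrow> bool" where
  "par P z \<longleftrightarrow> (\<forall>x. poly P (-x) = z * poly P x)"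

lemma par_Hs: "par (Hs s n) ((-1)^n)"
  unfolding par_def poly_Hs using hermite_minus[of n] by (simp add: minus_divide_left[symmetric])

lemma par_diff: "par P z \<Longrightarrow> par Q z \<Longrightarrow> par (P - smult a Q) z"
  by (simp add: par_def algebra_simps)

lemma pderiv_par:
  assumes "par P z" shows "par (pderiv P) (-z)"
  unfolding par_def
proof
  fix x
  have d1: "((\<lambda>x. poly P (-x)) has_real_derivative poly (pderiv P) (-x) * (-1)) (at x)"
    by (rule DERIV_chain2[OF poly_DERIV]) (auto intro!: derivative_eq_intros)
  have d2: "((\<lambda>x. z * poly P x) has_real_derivative z * poly (pderiv P) x) (at x)"
    by (intro DERIV_cmult poly_DERIV)
  have "(\<lambda>x. poly P (-x)) = (\<lambda>x. z * poly P x)" using assms by (auto simp: par_def)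
  with d1 have d1': "((\<lambda>x. z * poly P x) has_real_derivative poly (pderiv P) (-x) * (-1)) (at x)" by simp
  from DERIV_unique[OF d1' d2] show "poly (pderiv P) (- x) = - z * poly (pderiv P) x" by simp
qed

lemma divx_par:
  assumes "par p (-1)" shows "coeff p 0 = 0" "par (divx p) 1"
proof -
  have "poly p 0 = - poly p 0" using assms[unfolded par_def, rule_format, of 0] by simp
  then show c0: "coeff p 0 = 0" by (simp add: poly_0_coeff_0)
  show "par (divx p) 1" unfolding par_def
  proof
    fix x
    show "poly (divx p) (-x) = 1 * poly (divx p) x"
    proof (cases "x = 0")
      case False
      have "poly p (-x) = - poly p x" using assms by (simp add: par_def)
      then have "(-x) * poly (divx p) (-x) = - (x * poly (divx p) x)"
        using divx_eq[OF c0, of x] divx_eq[OF c0, of "-x"] by simp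
      then show ?thesis using False by simp
    qed simp
  qed
qed

lemma degree_divx: "degree (divx p) \<le> degree p - 1"
  by (rule degree_le) (auto simp: divx_def coeff_poly_shift coeff_eq_0)

lemma divx_0[simp]: "divx 0 = 0" by (simp add: divx_def)

lemma pCons_divx: assumes "coeff Q 0 = 0" shows "pCons 0 (divx Q) = Q"
  using assms by (auto simp: poly_eq_iff divx_def coeff_poly_shift coeff_pCons split: nat.splits)

lemma T1_inv:
  assumes "par P 1" "degree P \<le> n"
  shows "par (T1 c P) 1" "degree (T1 c P) \<le> n" "coeff P 1 = 0"
    "T1 c P = divx (pderiv P) - smult (2*c) P" "divx (pderiv P) = 0 \<or> degree (divx (pderiv P)) < n"
proof -
  have pd: "par (pderiv P) (-1)" using pderiv_par[OF assms(1)] by simp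
  show "coeff P 1 = 0" using divx_par(1)[OF pd] by (simp add: coeff_pderiv)
  show "par (T1 c P) 1" unfolding T1_def by (intro par_diff divx_par(2)[OF pd] assms(1))
  show D: "divx (pderiv P) = 0 \<or> degree (divx (pderiv P)) < n"
  proof (cases "degree P = 0")
    case True then show ?thesis by (simp add: pderiv_eq_0_iff[THEN iffD2])
  next
    case False
    have "degree (divx (pderiv P)) \<le> degree (pderiv P)" using degree_divx[of "pderiv P"] by simp
    then have "degree (divx (pderiv P)) \<le> degree P - 1" by (simp add: degree_pderiv)
    then show ?thesis using False assms(2) by (intro disjI2) arith
  qed
  have "degree (divx (pderiv P)) \<le> n" using D by auto
  then show "degree (T1 c P) \<le> n" unfolding T1_def using assms(2)
    by (intro degree_diff_le) (auto simp: degree_smult_le order_trans)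
  show "T1 c P = divx (pderiv P) - smult (2*c) P" by (simp add: T1_def)
qed

lemma T2_inv:
  assumes "par Q (-1)" "degree Q \<le> n"
  shows "par (T2 c Q) (-1)" "degree (T2 c Q) \<le> n" "coeff Q 0 = 0"
    "T2 c Q = pderiv (divx Q) - smult (2*c) Q" "pderiv (divx Q) = 0 \<or> degree (pderiv (divx Q)) < n"
proof -
  show c0: "coeff Q 0 = 0" by (rule divx_par(1)[OF assms(1)])
  show eq: "T2 c Q = pderiv (divx Q) - smult (2*c) Q"
    unfolding T2_def dG_def pCons_divx[OF c0] ..
  have pd: "par (pderiv (divx Q)) (-1)" using pderiv_par[OF divx_par(2)[OF assms(1)]] by simp
  show "par (T2 c Q) (-1)" unfolding eq by (intro par_diff pd assms(1))
  show D: "pderiv (divx Q) = 0 \<or> degree (pderiv (divx Q)) < n"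
  proof (cases "degree Q = 0")
    case True
    then have "degree (divx Q) = 0" using degree_divx[of Q] by simp
    then show ?thesis by (simp add: pderiv_eq_0_iff[THEN iffD2])
  next
    case False
    have "degree (pderiv (divx Q)) \<le> degree Q - 1" using degree_divx[of Q] by (simp add: degree_pderiv)
    then show ?thesis using False assms(2) by (intro disjI2) arith
  qed
  have "degree (pderiv (divx Q)) \<le> n" using D by auto
  then show "degree (T2 c Q) \<le> n" unfolding eq using assms(2)
    by (intro degree_diff_le) (auto simp: degree_smult_le order_trans)
qed

definition Lf :: "real \<Rightarrow> nat \<Rightarrow> real poly \<Rightarrow> real" where
  "Lf s n Q = integral\<^sup>L lborel (\<lambda>x. poly Q x * hermite n (x/s) * exp (- (1/s\<^sup>2) * x\<^sup>2))"

lemma Lf_int: assumes s: "s > 0"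
  shows "integrable lborel (\<lambda>x. poly Q x * hermite n (x/s) * exp (- (1/s\<^sup>2) * x\<^sup>2))"
proof -
  have "integrable lborel (\<lambda>x. poly (Q * Hs s n) x * exp (- (1/s\<^sup>2) * x\<^sup>2))"
    using s by (intro gauss_poly_int) auto
  then show ?thesis by (simp add: poly_Hs)
qed

lemma Lf_step:
  assumes s: "s > 0" and D: "D = 0 \<or> degree D < n"
  shows "Lf s n (D - smult a P) = - a * Lf s n P"
proof -
  have "Lf s n (D - smult a P) = Lf s n D - a * Lf s n P"
    unfolding Lf_def using Lf_int[OF s, of D n] Lf_int[OF s, of P n]
    by (simp add: algebra_simps)
  moreover have "Lf s n D = 0" unfolding Lf_def by (rule herm_orth[OF s D])
  ultimately show ?thesis by simp
qed

lemma pos_integral: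
  fixes f :: "real \<Rightarrow> real"
  assumes C: "continuous_on UNIV f" and nn: "\<And>x. 0 \<le> f x" and I: "integrable lborel f" and p: "f x0 > 0"
  shows "integral\<^sup>L lborel f > 0"
proof (rule ccontr)
  assume "\<not> ?thesis"
  moreover have "integral\<^sup>L lborel f \<ge> 0" using nn by simp
  ultimately have "integral\<^sup>L lborel f = 0" by simp
  then have ae: "AE x in lborel. f x = 0" using integral_nonneg_eq_0_iff_AE[OF I] nn by simp
  have "isCont f x0" using C by (simp add: continuous_on_eq_continuous_at)
  then obtain \<delta> where \<delta>: "\<delta> > 0" "\<And>y. dist y x0 < \<delta> \<Longrightarrow> dist (f y) (f x0) < f x0"
    using p unfolding continuous_at_eps_delta by blast
  obtain y where y: "y \<in> {x. f x = 0}" "x0 - \<delta> < y" "y < x0 + \<delta>"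
    using AE_point_in[of "{x. f x = 0}" "x0 - \<delta>" "x0 + \<delta>"] ae \<delta> by auto
  have "dist y x0 < \<delta>" using y by (simp add: dist_real_def abs_less_iff)
  then have "dist (f y) (f x0) < f x0" by (rule \<delta>(2))
  then show False using y(1) p by (simp add: dist_real_def)
qed

lemma rel_pow_L2:
  assumes "\<And>f g. Rl f g \<Longrightarrow> g \<in> L2"
  shows "rel_pow Rl (Suc j) f g \<Longrightarrow> g \<in> L2"
proof (induction j arbitrary: f)
  case 0 then show ?case using assms by auto
next
  case (Suc j)
  then obtain h where "Rl f h" "rel_pow Rl (Suc j) h g" by auto
  then show ?case using Suc.IH by blast
qed

lemma chain:
  fixes Rl :: "(real \<Rightarrow> complex) \<Rightarrow> (real \<Rightarrow> complex) \<Rightarrow> bool" and T :: "real poly \<Rightarrow> real poly"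
  assumes step: "\<And>f g a P. Rl f g \<Longrightarrow> (AE x in lborel. f x = a * complex_of_real (poly P x * exp (- c * x\<^sup>2))) \<Longrightarrow> Inv P
      \<Longrightarrow> AE x in lborel. g x = (- \<i> * a) * complex_of_real (poly (T P) x * exp (- c * x\<^sup>2))"
    and inv: "\<And>P. Inv P \<Longrightarrow> Inv (T P)"
  shows "rel_pow Rl j f g \<Longrightarrow> (AE x in lborel. f x = a * complex_of_real (poly P x * exp (- c * x\<^sup>2))) \<Longrightarrow> Inv P
      \<Longrightarrow> AE x in lborel. g x = ((- \<i>)^j * a) * complex_of_real (poly ((T^^j) P) x * exp (- c * x\<^sup>2))"
proof (induction j arbitrary: f a P)
  case 0 then show ?case by simp
next
  case (Suc j)
  from Suc.prems(1) obtain h where fh: "Rl f h" and hg: "rel_pow Rl j h g" by auto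
  have hae: "AE x in lborel. h x = (- \<i> * a) * complex_of_real (poly (T P) x * exp (- c * x\<^sup>2))"
    by (rule step[OF fh Suc.prems(2) Suc.prems(3)])
  have "AE x in lborel. g x = ((- \<i>)^j * (- \<i> * a)) * complex_of_real (poly ((T^^j) (T P)) x * exp (- c * x\<^sup>2))"
    by (rule Suc.IH[OF hg hae inv[OF Suc.prems(3)]])
  then show ?case by (simp del: funpow.simps add: funpow_Suc_right mult_ac)
qed

lemma Lf_iter:
  assumes "\<And>P. Inv P \<Longrightarrow> Lf s n (T P) = z * Lf s n P" and "\<And>P. Inv P \<Longrightarrow> Inv (T P)"
  shows "Inv P \<Longrightarrow> Lf s n ((T^^j) P) = z^j * Lf s n P"
proof (induction j arbitrary: P)
  case 0 then show ?case by simp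
next
  case (Suc j)
  have "Lf s n ((T^^Suc j) P) = Lf s n ((T^^j) (T P))" by (simp only: funpow_Suc_right o_apply)
  also have "\<dots> = z^j * Lf s n (T P)" by (rule Suc.IH[OF assms(2)[OF Suc.prems]])
  also have "\<dots> = z^Suc j * Lf s n P" using assms(1)[OF Suc.prems] by simp
  finally show ?case .
qed

lemma L2_add: "f \<in> L2 \<Longrightarrow> g \<in> L2 \<Longrightarrow> (\<lambda>x. f x + g x) \<in> L2"
proof -
  assume f: "f \<in> L2" and g: "g \<in> L2"
  have "(\<lambda>x. - g x) \<in> L2" using g unfolding L2_def by auto
  from L2_diff[OF f this] show ?thesis by simp
qed

lemma L2_cmult: "f \<in> L2 \<Longrightarrow> (\<lambda>x. a * f x) \<in> L2"
  unfolding L2_def by (auto simp: norm_mult power_mult_distrib)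

lemma L2_zero: "(\<lambda>x. 0) \<in> L2" unfolding L2_def by simp

lemma L2_sum: "(\<And>k. k \<in> A \<Longrightarrow> u k \<in> L2) \<Longrightarrow> (\<lambda>x. \<Sum>k\<in>A. u k x) \<in> L2"
proof (induction A rule: infinite_finite_induct)
  case (infinite A) then show ?case by (simp add: L2_zero)
next
  case empty then show ?case by (simp add: L2_zero)
next
  case (insert k A) then show ?case by (simp add: L2_add)
qed

lemma inner_tendsto:
  assumes S: "\<And>N. S N \<in> L2" and F: "F \<in> L2" and e: "e \<in> L2"
    and conv: "(\<lambda>N. L2_norm (\<lambda>x. S N x - F x)) \<longlonglongrightarrow> 0"
  shows "(\<lambda>N. L2_inner (S N) e) \<longlonglongrightarrow> L2_inner F e"
proof -
  define D where "D = (\<lambda>N x. S N x - F x)"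
  have DL2: "D N \<in> L2" for N unfolding D_def by (rule L2_diff[OF S F])
  define A where "A = (\<lambda>N. LINT x|lborel. (cmod (D N x))^2)"
  define B where "B = (LINT x|lborel. (cmod (e x))^2)"
  have A0: "A N \<ge> 0" for N unfolding A_def by simp
  have B0: "B \<ge> 0" unfolding B_def by simp
  have sA: "(\<lambda>N. sqrt (A N)) \<longlonglongrightarrow> 0" using conv unfolding A_def D_def L2_norm_def .
  define t where "t = (\<lambda>N::nat. sqrt (A N) + 1 / (real N + 1))"
  have tpos: "t N > 0" for N unfolding t_def using A0 by (simp add: add_nonneg_pos)
  have t0: "t \<longlonglongrightarrow> 0" unfolding t_def using tendsto_add[OF sA LIMSEQ_inverse_real_of_nat]
    by (simp add: inverse_eq_divide add.commute)
  define g where "g = (\<lambda>N. (sqrt (A N) + t N * B) / 2)"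
  have g0: "g \<longlonglongrightarrow> 0" unfolding g_def using tendsto_divide[OF tendsto_add[OF sA tendsto_mult[OF t0 tendsto_const]] tendsto_const, of 2 B] by simp
  have bound: "norm (L2_inner (S N) e - L2_inner F e) \<le> g N" for N
  proof -
    have iS: "integrable lborel (\<lambda>x. S N x * cnj (e x))" by (rule L2_prod_int[OF S e])
    have iF: "integrable lborel (\<lambda>x. F x * cnj (e x))" by (rule L2_prod_int[OF F e])
    have "L2_inner (S N) e - L2_inner F e = (LINT x|lborel. D N x * cnj (e x))"
      unfolding L2_inner_def D_def using iS iF by (simp add: left_diff_distrib)
    then have "norm (L2_inner (S N) e - L2_inner F e) \<le> (LINT x|lborel. norm (D N x * cnj (e x)))"
      by (simp add: integral_norm_bound)
    also have "\<dots> \<le> (LINT x|lborel. (cmod (D N x))^2 / (2 * t N) + t N * (cmod (e x))^2 / 2)"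
    proof (rule integral_mono)
      show "integrable lborel (\<lambda>x. norm (D N x * cnj (e x)))" by (rule integrable_norm[OF L2_prod_int[OF DL2 e]])
      show "integrable lborel (\<lambda>x. (cmod (D N x))^2 / (2 * t N) + t N * (cmod (e x))^2 / 2)"
        using L2_sq_int[OF DL2] L2_sq_int[OF e] by auto
      fix x
      have tp: "t N > 0" by (rule tpos)
      have "0 \<le> (cmod (D N x) - t N * cmod (e x))^2 / (2 * t N)" using tp by simp
      moreover have "(cmod (D N x) - t N * cmod (e x))^2 / (2 * t N)
          = (cmod (D N x))^2 / (2 * t N) + t N * (cmod (e x))^2 / 2 - cmod (D N x) * cmod (e x)"
        using tp by (simp add: field_simps power2_eq_square)
      ultimately show "norm (D N x * cnj (e x)) \<le> (cmod (D N x))^2 / (2 * t N) + t N * (cmod (e x))^2 / 2"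
        by (simp add: norm_mult)
    qed
    also have "\<dots> = A N / (2 * t N) + t N * B / 2"
      unfolding A_def B_def using L2_sq_int[OF DL2] L2_sq_int[OF e] by simp
    also have "\<dots> \<le> g N"
    proof -
      have "A N / t N \<le> sqrt (A N)"
      proof (cases "A N = 0")
        case False
        then have sp: "sqrt (A N) > 0" using A0[of N] by simp
        have "sqrt (A N) \<le> t N" unfolding t_def by simp
        moreover have "0 \<le> A N" by (rule A0)
        moreover have "0 < t N * sqrt (A N)" using sp tpos[of N] by (rule mult_pos_pos[rotated])
        ultimately have "A N / t N \<le> A N / sqrt (A N)" by (rule divide_left_mono)
        also have "\<dots> = sqrt (A N)" using A0[of N] by (rule real_div_sqrt)
        finally show ?thesis .
      qed simp
      then show ?thesis unfolding g_def using tpos[of N] by (simp add: field_simps)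
    qed
    finally show ?thesis .
  qed
  have "(\<lambda>N. L2_inner (S N) e - L2_inner F e) \<longlonglongrightarrow> 0"
    by (rule Lim_null_comparison[OF always_eventually g0]) (use bound in auto)
  then show ?thesis by (simp add: LIM_zero_iff)
qed

lemma coef_ip:
  fixes \<sigma> :: real assumes \<sigma>: "\<sigma> > 0"
  shows "complex_of_real ((-1)^k / real (2*k+1) * \<sigma>^(2*k+1)) * (\<i> / complex_of_real \<sigma>)^(2*k+1)
         = \<i> * complex_of_real (1 / real (2*k+1))"
proof -
  have i: "\<i>^(2*k+1) = \<i> * (-1)^k" by (simp add: power_add power_mult)
  have "(\<i> / complex_of_real \<sigma>)^(2*k+1) = \<i>^(2*k+1) / complex_of_real (\<sigma>^(2*k+1))"
    by (simp add: power_divide)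
  also have "\<dots> = \<i> * (-1)^k / complex_of_real (\<sigma>^(2*k+1))" by (simp add: i)
  finally have e: "(\<i> / complex_of_real \<sigma>)^(2*k+1) = \<i> * (-1)^k / complex_of_real (\<sigma>^(2*k+1))" .
  have "(-1::complex)^k * (-1)^k = 1" by (simp flip: power_mult_distrib)
  moreover have "complex_of_real (\<sigma>^(2*k+1)) \<noteq> 0" using \<sigma> by simp
  ultimately show ?thesis unfolding e using \<sigma>
    by (simp add: field_simps)
qed

lemma odd_recip_not_summable: "\<not> summable (\<lambda>k. 1 / real (2*k+1))"
proof
  assume S: "summable (\<lambda>k. 1 / real (2*k+1))"
  have "summable (\<lambda>k. 2 * (1 / real (2*k+1)))" using summable_mult[OF S] by simp
  then have "summable (\<lambda>n. inverse (real (Suc n)))"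
  proof (rule summable_comparison_test[rotated])
    show "\<exists>N. \<forall>n\<ge>N. norm (inverse (real (Suc n))) \<le> 2 * (1 / real (2 * n + 1))"
      by (intro exI[of _ 0] allI impI) (simp add: field_simps)
  qed
  then show False using not_summable_harmonic[where 'a = real] summable_Suc_iff[of "\<lambda>n. inverse (real n) :: real"]
    by simp
qed

lemma no_series:
  fixes \<sigma> :: real and en F :: "real \<Rightarrow> complex" and u :: "nat \<Rightarrow> real \<Rightarrow> complex"
  assumes \<sigma>: "\<sigma> > 0" and en: "en \<in> L2" and uL2: "\<And>k. u k \<in> L2" and F: "F \<in> L2"
    and ip: "\<And>k. L2_inner (u k) en = (\<i> / complex_of_real \<sigma>)^(2*k+1)"
    and conv: "(\<lambda>N. L2_norm (\<lambda>x. (\<Sum>n\<le>N. complex_of_real ((-1)^n / real (2*n+1) * \<sigma>^(2*n+1)) * u n x) - F x)) \<longlonglongrightarrow> 0"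
  shows False
proof -
  define S where "S = (\<lambda>N x. \<Sum>n\<le>N. complex_of_real ((-1)^n / real (2*n+1) * \<sigma>^(2*n+1)) * u n x)"
  have SL2: "S N \<in> L2" for N unfolding S_def by (intro L2_sum L2_cmult uL2)
  have lim: "(\<lambda>N. L2_inner (S N) en) \<longlonglongrightarrow> L2_inner F en"
    by (rule inner_tendsto[OF SL2 F en]) (use conv in \<open>simp add: S_def\<close>)
  have "L2_inner (S N) en = (\<Sum>n\<le>N. \<i> * complex_of_real (1 / real (2*n+1)))" for N
  proof -
    have "L2_inner (S N) en = integral\<^sup>L lborel (\<lambda>x. \<Sum>n\<le>N. complex_of_real ((-1)^n / real (2*n+1) * \<sigma>^(2*n+1)) * (u n x * cnj (en x)))"
      unfolding L2_inner_def S_def by (simp add: sum_distrib_right mult.assoc)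
    also have "\<dots> = (\<Sum>n\<le>N. complex_of_real ((-1)^n / real (2*n+1) * \<sigma>^(2*n+1)) * L2_inner (u n) en)"
      unfolding L2_inner_def
      by (subst Bochner_Integration.integral_sum) (auto intro!: integrable_mult_right L2_prod_int[OF uL2 en])
    also have "\<dots> = (\<Sum>n\<le>N. \<i> * complex_of_real (1 / real (2*n+1)))"
      unfolding ip by (intro sum.cong refl coef_ip[OF \<sigma>])
    finally show ?thesis .
  qed
  with lim have "(\<lambda>N. \<Sum>n\<le>N. \<i> * complex_of_real (1 / real (2*n+1))) \<longlonglongrightarrow> L2_inner F en" by simp
  then have "(\<lambda>N. Im (\<Sum>n\<le>N. \<i> * complex_of_real (1 / real (2*n+1)))) \<longlonglongrightarrow> Im (L2_inner F en)"
    by (rule tendsto_Im)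
  then have "(\<lambda>N. \<Sum>n\<le>N. 1 / real (2*n+1)) \<longlonglongrightarrow> Im (L2_inner F en)"
    by (simp add: Im_sum)
  then have "summable (\<lambda>k. 1 / real (2*k+1))"
    unfolding summable_iff_convergent' convergent_def by blast
  then show False using odd_recip_not_summable by blast
qed

lemma ip_calc:
  fixes K :: complex and hc :: real
  assumes s: "s > 0" and c: "c = 1 / (2 * s\<^sup>2)" and uL2: "u \<in> L2"
    and en: "en = (\<lambda>x. complex_of_real hc * complex_of_real (poly Pn x * exp (- c * x\<^sup>2)))"
    and uae: "AE x in lborel. u x = (z * complex_of_real hc) * complex_of_real (poly Q x * exp (- c * x\<^sup>2))"
    and Pn: "\<And>x. poly Pn x = hermite n (x/s)"
  shows "L2_inner u en = z * complex_of_real (hc\<^sup>2 * Lf s n Q)"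
proof -
  have c0: "c > 0" using c s by simp
  have enL2: "en \<in> L2" unfolding en by (rule pg_L2[OF c0])
  have "L2_inner u en = integral\<^sup>L lborel (\<lambda>x. z * complex_of_real (hc\<^sup>2 * (poly Q x * hermite n (x/s) * exp (- (1/s\<^sup>2) * x\<^sup>2))))"
    unfolding L2_inner_def
  proof (rule integral_cong_AE)
    show "(\<lambda>x. u x * cnj (en x)) \<in> borel_measurable lborel" using L2_prod_int[OF uL2 enL2] by auto
    have "(\<lambda>x. poly Q x * hermite n (x/s) * exp (- (1/s\<^sup>2) * x\<^sup>2)) \<in> borel_measurable lborel"
      using Lf_int[OF s] by auto
    then show "(\<lambda>x. z * complex_of_real (hc\<^sup>2 * (poly Q x * hermite n (x/s) * exp (- (1/s\<^sup>2) * x\<^sup>2)))) \<in> borel_measurable lborel"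
      by measurable
    show "AE x in lborel. u x * cnj (en x) = z * complex_of_real (hc\<^sup>2 * (poly Q x * hermite n (x/s) * exp (- (1/s\<^sup>2) * x\<^sup>2)))"
      using uae
    proof eventually_elim
      case (elim x)
      have ee: "exp (- c * x\<^sup>2) * exp (- c * x\<^sup>2) = exp (- (1/s\<^sup>2) * x\<^sup>2)"
        unfolding exp_add[symmetric] c by (simp add: field_simps)
      have "u x * cnj (en x) = z * complex_of_real (hc\<^sup>2 * (poly Q x * poly Pn x * (exp (- c * x\<^sup>2) * exp (- c * x\<^sup>2))))"
        using elim by (simp add: en power2_eq_square mult_ac)
      then show ?case unfolding ee Pn .
    qed
  qed
  also have "\<dots> = z * complex_of_real (hc\<^sup>2 * Lf s n Q)"
    unfolding Lf_def by (simp only: integral_mult_right_zero integral_complex_of_real)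
  finally show ?thesis .
qed

lemma parity_excl:
  fixes e :: "real \<Rightarrow> complex"
  assumes eL2: "e \<in> L2" and one: "L2_inner e e = 1" and sym: "\<And>x. e (-x) = z * e x" and z: "z \<noteq> z'"
  shows "\<not> (AE x in lborel. e (-x) = z' * e x)"
proof
  assume "AE x in lborel. e (-x) = z' * e x"
  then have ae: "AE x in lborel. e x = 0"
  proof eventually_elim
    case (elim x)
    then have "(z - z') * e x = 0" using sym[of x] by (simp add: algebra_simps)
    then show ?case using z by simp
  qed
  have "AE x in lborel. e x * cnj (e x) = 0" using ae by eventually_elim simp
  then have "L2_inner e e = 0"
    unfolding L2_inner_def by (rule integral_eq_zero_AE)
  then show False using one by simp
qed

lemma not_in_series:
  fixes Rl :: "(real \<Rightarrow> complex) \<Rightarrow> (real \<Rightarrow> complex) \<Rightarrow> bool" and T :: "real poly \<Rightarrow> real poly"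
    and en :: "real \<Rightarrow> complex" and hc :: real
  assumes s: "s > 0" and c: "c = 1 / (2 * s\<^sup>2)" and \<sigma>: "\<sigma> > 0" and c\<sigma>: "2 * c = 1 / \<sigma>" and se: "sqrt \<epsilon> = \<sigma>"
    and step: "\<And>f g a P. Rl f g \<Longrightarrow> (AE x in lborel. f x = a * complex_of_real (poly P x * exp (- c * x\<^sup>2))) \<Longrightarrow> Inv P
      \<Longrightarrow> AE x in lborel. g x = (- \<i> * a) * complex_of_real (poly (T P) x * exp (- c * x\<^sup>2))"
    and inv: "\<And>P. Inv P \<Longrightarrow> Inv (T P)"
    and LfT: "\<And>P. Inv P \<Longrightarrow> Lf s n (T P) = - (2*c) * Lf s n P"
    and RL2: "\<And>f g. Rl f g \<Longrightarrow> g \<in> L2"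
    and InvP: "Inv Pn" and Pn: "\<And>x. poly Pn x = hermite n (x/s)"
    and en: "en = (\<lambda>x. complex_of_real hc * complex_of_real (poly Pn x * exp (- c * x\<^sup>2)))"
    and norm1: "hc\<^sup>2 * Lf s n Pn = 1"
  shows "en \<notin> D_series \<epsilon> Rl V"
proof
  assume "en \<in> D_series \<epsilon> Rl V"
  then obtain u F where u: "\<And>k. rel_pow Rl (2*k+1) en (u k)" and F: "F \<in> L2"
    and conv: "(\<lambda>N. L2_norm (\<lambda>x. (\<Sum>n\<le>N. complex_of_real ((-1)^n / real (2*n+1) * sqrt \<epsilon> ^ (2*n+1)) * u n x) - F x)) \<longlonglongrightarrow> 0"
    unfolding D_series_def by blast
  have c0: "c > 0" using c s by simp
  have enL2: "en \<in> L2" unfolding en by (rule pg_L2[OF c0])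
  have uL2: "u k \<in> L2" for k using rel_pow_L2[OF RL2, where j = "2*k"] u[of k] by simp
  have en_ae: "AE x in lborel. en x = complex_of_real hc * complex_of_real (poly Pn x * exp (- c * x\<^sup>2))"
    by (simp add: en)
  have ip: "L2_inner (u k) en = (\<i> / complex_of_real \<sigma>)^(2*k+1)" for k
  proof -
    let ?j = "2*k+1"
    have uae: "AE x in lborel. u k x = ((- \<i>)^?j * complex_of_real hc) * complex_of_real (poly ((T^^?j) Pn) x * exp (- c * x\<^sup>2))"
      by (rule chain[where Rl = Rl and T = T and Inv = Inv, OF step inv u en_ae InvP]) auto
    have "L2_inner (u k) en = (- \<i>)^?j * complex_of_real (hc\<^sup>2 * Lf s n ((T^^?j) Pn))"
      by (rule ip_calc[OF s c uL2 en uae Pn])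
    also have "Lf s n ((T^^?j) Pn) = (- (2*c))^?j * Lf s n Pn"
      by (rule Lf_iter[where Inv = Inv, OF LfT inv InvP])
    also have "hc\<^sup>2 * ((- (2*c))^?j * Lf s n Pn) = (- (2*c))^?j" using norm1 by (simp add: algebra_simps)
    also have "(- \<i>)^?j * complex_of_real ((- (2*c))^?j) = ((- \<i>) * complex_of_real (- (2*c)))^?j"
      by (simp add: power_mult_distrib)
    also have "(- \<i>) * complex_of_real (- (2*c)) = \<i> / complex_of_real \<sigma>"
      using c\<sigma> by (simp add: field_simps)
    finally show ?thesis .
  qed
  show False
    by (rule no_series[OF \<sigma> enL2 uL2 F ip]) (use conv se in simp)
qed

theorem corollary3p10:
  fixes \<epsilon> :: real and n :: nat
  assumes "0 < \<epsilon>" and "\<epsilon> \<le> 1"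
  shows "eigvec \<epsilon> n \<notin> D_S \<epsilon> \<and> eigvec \<epsilon> n \<notin> D_Sstar \<epsilon>"
proof -
  have \<epsilon>: "\<epsilon> > 0" by fact
  define s where "s = \<epsilon> powr (1/4)"
  define \<sigma> where "\<sigma> = sqrt \<epsilon>"
  define c where "c = 1 / (2 * s\<^sup>2)"
  define Pn where "Pn = Hs s n"
  have s: "s > 0" using \<epsilon> by (simp add: s_def)
  have \<sigma>: "\<sigma> > 0" using \<epsilon> by (simp add: \<sigma>_def)
  have s2: "s\<^sup>2 = \<sigma>"
  proof -
    have "s\<^sup>2 = \<epsilon> powr (1/4) * \<epsilon> powr (1/4)" by (simp add: s_def power2_eq_square)
    also have "\<dots> = \<epsilon> powr (1/2)" by (simp add: powr_add[symmetric])
    also have "\<dots> = \<sigma>" using \<epsilon> by (simp add: \<sigma>_def powr_half_sqrt)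
    finally show ?thesis .
  qed
  have c0: "c > 0" using s by (simp add: c_def)
  have c\<sigma>: "2 * c = 1 / \<sigma>" using s2 by (simp add: c_def)
  have PnH: "poly Pn x = hermite n (x/s)" for x by (simp add: Pn_def poly_Hs)
  have hu: "herm_unnorm \<epsilon> n x = poly Pn x * exp (- c * x\<^sup>2)" for x
  proof -
    have "- (x^2) / (2 * sqrt \<epsilon>) = - c * x\<^sup>2" using s2 by (simp add: c_def \<sigma>_def)
    then show ?thesis by (simp add: herm_unnorm_def PnH s_def)
  qed
  define Nn where "Nn = (LINT x|lborel. (herm_unnorm \<epsilon> n x)^2)"
  have sq: "(poly Pn x * exp (- c * x\<^sup>2))^2 = poly Pn x * hermite n (x/s) * exp (- (1/s\<^sup>2) * x\<^sup>2)" for x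
  proof -
    have "exp (- c * x\<^sup>2) * exp (- c * x\<^sup>2) = exp (- (1/s\<^sup>2) * x\<^sup>2)"
      unfolding exp_add[symmetric] c_def by (simp add: field_simps)
    then show ?thesis by (simp add: power2_eq_square PnH[symmetric] mult_ac)
  qed
  have NnLf: "Nn = Lf s n Pn" unfolding Nn_def Lf_def hu sq ..
  have Nn_pos: "Nn > 0"
  proof -
    have "hp n \<noteq> 0" by (rule hp_nz)
    then have "poly (hp n) \<noteq> poly 0" using poly_eq_poly_eq_iff by blast
    then obtain y0 where y0: "poly (hp n) y0 \<noteq> 0" by (auto simp: fun_eq_iff)
    have "integral\<^sup>L lborel (\<lambda>x. (poly Pn x * exp (- c * x\<^sup>2))^2) > 0"
    proof (rule pos_integral[of "\<lambda>x. (poly Pn x * exp (- c * x\<^sup>2))^2" "s * y0"])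
      show "continuous_on UNIV (\<lambda>x. (poly Pn x * exp (- c * x\<^sup>2))^2)"
        by (intro continuous_on_power pgr_cont)
      show "integrable lborel (\<lambda>x. (poly Pn x * exp (- c * x\<^sup>2))^2)"
        unfolding sq using Lf_int[OF s] .
      show "0 < (poly Pn (s * y0) * exp (- c * (s * y0)\<^sup>2))^2"
        using y0 s by (simp add: PnH poly_hp)
    qed simp
    then show ?thesis unfolding Nn_def hu .
  qed
  define hc where "hc = herm_const \<epsilon> n"
  have hc: "hc = 1 / sqrt Nn" unfolding hc_def herm_const_def Nn_def ..
  have norm1: "hc\<^sup>2 * Lf s n Pn = 1" using Nn_pos unfolding hc NnLf[symmetric] by (simp add: power_divide)
  define en where "en = eigvec \<epsilon> n"
  have en: "en = (\<lambda>x. complex_of_real hc * complex_of_real (poly Pn x * exp (- c * x\<^sup>2)))"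
    unfolding en_def eigvec_def[abs_def] hc_def hu by simp
  have enL2: "en \<in> L2" unfolding en by (rule pg_L2[OF c0])
  have one: "L2_inner en en = 1"
  proof -
    have "L2_inner en en = 1 * complex_of_real (hc\<^sup>2 * Lf s n Pn)"
      by (rule ip_calc[OF s c_def enL2 en _ PnH]) (simp add: en)
    then show ?thesis using norm1 by simp
  qed
  have sym: "en (-x) = (-1)^n * en x" for x
  proof -
    have "poly Pn (-x) = (-1)^n * poly Pn x" using par_Hs[of s n] by (simp add: Pn_def par_def)
    then show ?thesis by (simp add: en)
  qed
  have degPn: "degree Pn = n" using degree_Hs[OF s] by (simp add: Pn_def)
  show ?thesis
  proof (cases "even n")
    case True
    have parP: "par Pn 1" using par_Hs[of s n] True by (simp add: Pn_def)
    have notodd: "en \<notin> L2_odd"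
    proof
      assume "en \<in> L2_odd"
      then have "AE x in lborel. en (-x) = (-1) * en x" by (simp add: L2_odd_def)
      moreover have "\<not> (AE x in lborel. en (-x) = (-1) * en x)"
        by (rule parity_excl[OF enL2 one sym]) (use True in simp)
      ultimately show False by simp
    qed
    have "en \<notin> D_series \<epsilon> t_rel L2_even"
    proof (rule not_in_series[where Inv = "\<lambda>P. par P 1 \<and> degree P \<le> n" and T = "T1 c",
          OF s c_def \<sigma> c\<sigma> \<sigma>_def[symmetric] _ _ _ _ _ PnH en norm1])
      show "AE x in lborel. g x = (- \<i> * a) * complex_of_real (poly (T1 c P) x * exp (- c * x\<^sup>2))"
        if "t_rel f g" "AE x in lborel. f x = a * complex_of_real (poly P x * exp (- c * x\<^sup>2))"
           "par P 1 \<and> degree P \<le> n" for f g a P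
      proof -
        have "coeff P 1 = 0" using T1_inv(3)[of P n] that(3) by blast
        then show ?thesis by (rule t_step[OF c0 that(1) that(2)])
      qed
      show "par (T1 c P) 1 \<and> degree (T1 c P) \<le> n" if "par P 1 \<and> degree P \<le> n" for P
        using that T1_inv(1,2) by blast
      show "Lf s n (T1 c P) = - (2 * c) * Lf s n P" if "par P 1 \<and> degree P \<le> n" for P
        using that T1_inv(4)[of P n c] T1_inv(5)[of P n] Lf_step[OF s] by auto
      show "g \<in> L2" if "t_rel f g" for f g using that by (auto simp: t_rel_def qinv_rel_def)
      show "par Pn 1 \<and> degree Pn \<le> n" using parP degPn by simp
    qed
    then show ?thesis using notodd by (auto simp: en_def D_S_def D_Sstar_def D_series_def)
  next
    case False
    have parP: "par Pn (-1)" using par_Hs[of s n] False by (simp add: Pn_def)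
    have noteven: "en \<notin> L2_even"
    proof
      assume "en \<in> L2_even"
      then have "AE x in lborel. en (-x) = 1 * en x" by (simp add: L2_even_def)
      moreover have "\<not> (AE x in lborel. en (-x) = 1 * en x)"
        by (rule parity_excl[OF enL2 one sym]) (use False in simp)
      ultimately show False by simp
    qed
    have "en \<notin> D_series \<epsilon> tadj_rel L2_odd"
    proof (rule not_in_series[where Inv = "\<lambda>P. par P (-1) \<and> degree P \<le> n" and T = "T2 c",
          OF s c_def \<sigma> c\<sigma> \<sigma>_def[symmetric] _ _ _ _ _ PnH en norm1])
      show "AE x in lborel. w x = (- \<i> * a) * complex_of_real (poly (T2 c P) x * exp (- c * x\<^sup>2))"
        if "tadj_rel g w" "AE x in lborel. g x = a * complex_of_real (poly P x * exp (- c * x\<^sup>2))"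
           "par P (-1) \<and> degree P \<le> n" for g w a P
      proof -
        have "coeff P 0 = 0" using T2_inv(3)[of P n] that(3) by blast
        then show ?thesis by (rule tadj_step[OF c0 that(1) that(2)])
      qed
      show "par (T2 c P) (-1) \<and> degree (T2 c P) \<le> n" if "par P (-1) \<and> degree P \<le> n" for P
        using that T2_inv(1,2) by blast
      show "Lf s n (T2 c P) = - (2 * c) * Lf s n P" if "par P (-1) \<and> degree P \<le> n" for P
        using that T2_inv(4)[of P n c] T2_inv(5)[of P n] Lf_step[OF s] by auto
      show "w \<in> L2" if "tadj_rel g w" for g w using that by (auto simp: tadj_rel_def)
      show "par Pn (-1) \<and> degree Pn \<le> n" using parP degPn by simp
    qed
    then show ?thesis using noteven by (auto simp: en_def D_S_def D_Sstar_def D_series_def)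
  qed
qed

end
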